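(* Let $\rho_1,\rho_2,k_1,k_2,L>0$, $0<\alpha<1$ and $\eta\ge0$, and let $\mathcal{A}$ be the operator on $\mathcal{H}$ described in the context. (a) If $\eta=0$, then $i\lambda I-\mathcal{A}:\mathcal{D}(\mathcal{A})\to\mathcal{H}$ is surjective for every real $\lambda\neq0$. (b) If $\eta>0$, then $i\lambda I-\mathcal{A}:\mathcal{D}(\mathcal{A})\to\mathcal{H}$ is surjective for every $\lambda\in\mathbb{R}$.
   Context: Set $\mu(\xi)=|\xi|^{(2\alpha-1)/2}$ for $\xi\in\mathbb{R}$ and $\mathfrak{C}=\pi^{-1}\sin(\alpha\pi)$. All function spaces are complex. Let $\mathbb{H}^1_0=\{(u,v)\in H^1(-L,0)\times H^1(0,L):\ u(-L)=v(L)=0,\ u(0)=v(0)\}$, $\mathbb{L}^2=L^2(-L,0)\times L^2(0,L)$, and $\mathcal{H}=\mathbb{H}^1_0\times\mathbb{L}^2\times L^2(\mathbb{R};\mathbb{L}^2)$, whose elements are written $\mathbb{U}=(u,v,U,V,\varphi_1,\varphi_2)$ with $(u,v)\in\mathbb{H}^1_0$, $(U,V)\in\mathbb{L}^2$, $\varphi_1\in L^2(\mathbb{R};L^2(-L,0))$, $\varphi_2\in L^2(\mathbb{R};L^2(0,L))$ (functions of $(x,\xi)$). $\mathcal{H}$ is a Hilbert space with inner product $\langle\mathbb{U},\tilde{\mathbb{U}}\rangle_{\mathcal H}=\rho_1\int_{-L}^0U\overline{\tilde U}dx+\rho_2\int_0^LV\overline{\tilde V}dx+k_1\int_{-L}^0u_x\overline{\tilde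 u_x}dx+k_2\int_0^Lv_x\overline{\tilde v_x}dx+\mathfrak{C}\int_{\mathbb R}\int_{-L}^0\varphi_1\overline{\tilde\varphi_1}\,dx\,d\xi+\mathfrak{C}\int_{\mathbb R}\int_0^L\varphi_2\overline{\tilde\varphi_2}\,dx\,d\xi$. The domain $\mathcal{D}(\mathcal{A})$ is the set of $\mathbb{U}=(u,v,U,V,\varphi_1,\varphi_2)\in\mathcal{H}$ such that $(U,V)\in\mathbb{H}^1_0$, $u\in H^2(-L,0)$, $v\in H^2(0,L)$, $k_1u_x(0)=k_2v_x(0)$, $|\xi|\varphi_1\in L^2(\mathbb{R};L^2(-L,0))$, $-(|\xi|^2+\eta)\varphi_1+\mu(\xi)U\in L^2(\mathbb{R};L^2(-L,0))$, $|\xi|\varphi_2\in L^2(\mathbb{R};L^2(0,L))$, $-(|\xi|^2+\eta)\varphi_2+\mu(\xi)V\in L^2(\mathbb{R};L^2(0,L))$; and $$\mathcal{A}\mathbb{U}=\Big(U,\ V,\ \tfrac{1}{\rho_1}\big[k_1u_{xx}-\mathfrak{C}\textstyle\int_{\mathbb R}\mu(\xi)\varphi_1(\cdot,\xi)d\xi\big],\ \tfrac{1}{\rho_2}\big[k_2v_{xx}-\mathfrak{C}\textstyle\int_{\mathbb R}\mu(\xi)\varphi_2(\cdot,\xi)d\xi\big],\ -(|\xi|^2+\eta)\varphi_1+\mu(\xi)U,\ -(|\xi|^2+\eta)\varphi_2+\mu(\xi)V\Big).$$ *)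

theory Defs
  imports "HOL-Analysis.Analysis"
begin

definition L2 :: "real set \<Rightarrow> (real \<Rightarrow> complex) \<Rightarrow> bool" where
  "L2 S f \<longleftrightarrow> f \<in> borel_measurable (lebesgue_on S) \<and>
     integrable (lebesgue_on S) (\<lambda>x. (cmod (f x))^2)"

text \<open>L2(R; L2(S)) identified with L2(S x R); a function phi x xi (space variable x, then xi).\<close>
definition L2R :: "real set \<Rightarrow> (real \<Rightarrow> real \<Rightarrow> complex) \<Rightarrow> bool" where
  "L2R S \<phi> \<longleftrightarrow> (\<lambda>p. \<phi> (fst p) (snd p)) \<in> borel_measurable (lebesgue_on (S \<times> UNIV)) \<and>
     integrable (lebesgue_on (S \<times> UNIV)) (\<lambda>p. (cmod (\<phi> (fst p) (snd p)))^2)"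

text \<open>u (continuous representative on [a,b]) belongs to H^1(a,b) with (weak) derivative g in L2.\<close>
definition has_weak_deriv :: "real \<Rightarrow> real \<Rightarrow> (real \<Rightarrow> complex) \<Rightarrow> (real \<Rightarrow> complex) \<Rightarrow> bool" where
  "has_weak_deriv a b u g \<longleftrightarrow> L2 {a..b} g \<and>
     (\<forall>x\<in>{a..b}. u x = u a + integral\<^sup>L (lebesgue_on {a..x}) g)"

definition H1 :: "real \<Rightarrow> real \<Rightarrow> (real \<Rightarrow> complex) \<Rightarrow> bool" where
  "H1 a b u \<longleftrightarrow> L2 {a..b} u \<and> (\<exists>g. has_weak_deriv a b u g)"

definition H10 :: "real \<Rightarrow> (real \<Rightarrow> complex) \<Rightarrow> (real \<Rightarrow> complex) \<Rightarrow> bool" where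
  "H10 L u v \<longleftrightarrow> H1 (-L) 0 u \<and> H1 0 L v \<and> u (-L) = 0 \<and> v L = 0 \<and> u 0 = v 0"

definition mu :: "real \<Rightarrow> real \<Rightarrow> real" where
  "mu \<alpha> \<xi> = \<bar>\<xi>\<bar> powr ((2 * \<alpha> - 1) / 2)"

definition Cfrak :: "real \<Rightarrow> real" where
  "Cfrak \<alpha> = sin (\<alpha> * pi) / pi"

definition in_H :: "real \<Rightarrow> (real \<Rightarrow> complex) \<Rightarrow> (real \<Rightarrow> complex) \<Rightarrow> (real \<Rightarrow> complex) \<Rightarrow>
    (real \<Rightarrow> complex) \<Rightarrow> (real \<Rightarrow> real \<Rightarrow> complex) \<Rightarrow> (real \<Rightarrow> real \<Rightarrow> complex) \<Rightarrow> bool" where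
  "in_H L u v U V \<phi>1 \<phi>2 \<longleftrightarrow> H10 L u v \<and> L2 {-L..0} U \<and> L2 {0..L} V \<and>
     L2R {-L..0} \<phi>1 \<and> L2R {0..L} \<phi>2"

text \<open>The resolvent equation  (i lambda I - A) W = F  with W in D(A) and F in H, where
  g1,h1 (resp. g2,h2) are the first and second derivatives of u (resp. v), the first
  derivative being taken as its continuous representative.  Equalities in H are
  understood almost everywhere (pointwise for the H^1 components, which are continuous).\<close>
definition resolvent_solution ::
  "real \<Rightarrow> real \<Rightarrow> real \<Rightarrow> real \<Rightarrow> real \<Rightarrow> real \<Rightarrow> real \<Rightarrow> real \<Rightarrow>
   (real \<Rightarrow> complex) \<Rightarrow> (real \<Rightarrow> complex) \<Rightarrow> (real \<Rightarrow> complex) \<Rightarrow> (real \<Rightarrow> complex) \<Rightarrow>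
   (real \<Rightarrow> real \<Rightarrow> complex) \<Rightarrow> (real \<Rightarrow> real \<Rightarrow> complex) \<Rightarrow>
   (real \<Rightarrow> complex) \<Rightarrow> (real \<Rightarrow> complex) \<Rightarrow> (real \<Rightarrow> complex) \<Rightarrow> (real \<Rightarrow> complex) \<Rightarrow>
   (real \<Rightarrow> real \<Rightarrow> complex) \<Rightarrow> (real \<Rightarrow> real \<Rightarrow> complex) \<Rightarrow> bool" where
  "resolvent_solution \<rho>1 \<rho>2 k1 k2 L \<alpha> \<eta> lam f1 f2 f3 f4 f5 f6 u v U V \<phi>1 \<phi>2 \<longleftrightarrow>
    in_H L u v U V \<phi>1 \<phi>2 \<and>
    \<comment> \<open>domain conditions\<close>
    H10 L U V \<and>
    (\<exists>g1 h1 g2 h2.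
       has_weak_deriv (-L) 0 u g1 \<and> has_weak_deriv (-L) 0 g1 h1 \<and>
       has_weak_deriv 0 L v g2 \<and> has_weak_deriv 0 L g2 h2 \<and>
       of_real k1 * g1 0 = of_real k2 * g2 0 \<and>
       L2R {-L..0} (\<lambda>x \<xi>. of_real \<bar>\<xi>\<bar> * \<phi>1 x \<xi>) \<and>
       L2R {-L..0} (\<lambda>x \<xi>. - of_real (\<xi>^2 + \<eta>) * \<phi>1 x \<xi> + of_real (mu \<alpha> \<xi>) * U x) \<and>
       L2R {0..L} (\<lambda>x \<xi>. of_real \<bar>\<xi>\<bar> * \<phi>2 x \<xi>) \<and>
       L2R {0..L} (\<lambda>x \<xi>. - of_real (\<xi>^2 + \<eta>) * \<phi>2 x \<xi> + of_real (mu \<alpha> \<xi>) * V x) \<and>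
    \<comment> \<open>the equations (i lambda - A) W = F\<close>
       (\<forall>x\<in>{-L..0}. \<i> * of_real lam * u x - U x = f1 x) \<and>
       (\<forall>x\<in>{0..L}. \<i> * of_real lam * v x - V x = f2 x) \<and>
       (AE x in lebesgue_on {-L..0}. \<i> * of_real lam * U x
          - (of_real k1 * h1 x - of_real (Cfrak \<alpha>) *
               integral\<^sup>L lebesgue (\<lambda>\<xi>. of_real (mu \<alpha> \<xi>) * \<phi>1 x \<xi>)) / of_real \<rho>1 = f3 x) \<and>
       (AE x in lebesgue_on {0..L}. \<i> * of_real lam * V x
          - (of_real k2 * h2 x - of_real (Cfrak \<alpha>) *
               integral\<^sup>L lebesgue (\<lambda>\<xi>. of_real (mu \<alpha> \<xi>) * \<phi>2 x \<xi>)) / of_real \<rho>2 = f4 x) \<and>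
       (AE p in lebesgue_on ({-L..0} \<times> UNIV). \<i> * of_real lam * \<phi>1 (fst p) (snd p)
          - (- of_real ((snd p)^2 + \<eta>) * \<phi>1 (fst p) (snd p) + of_real (mu \<alpha> (snd p)) * U (fst p))
          = f5 (fst p) (snd p)) \<and>
       (AE p in lebesgue_on ({0..L} \<times> UNIV). \<i> * of_real lam * \<phi>2 (fst p) (snd p)
          - (- of_real ((snd p)^2 + \<eta>) * \<phi>2 (fst p) (snd p) + of_real (mu \<alpha> (snd p)) * V (fst p))
          = f6 (fst p) (snd p)))"

definition resolvent_surjective :: "real \<Rightarrow> real \<Rightarrow> real \<Rightarrow> real \<Rightarrow> real \<Rightarrow> real \<Rightarrow> real \<Rightarrow> real \<Rightarrow> bool" where
  "resolvent_surjective \<rho>1 \<rho>2 k1 k2 L \<alpha> \<eta> lam \<longleftrightarrow>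
    (\<forall>f1 f2 f3 f4 f5 f6. in_H L f1 f2 f3 f4 f5 f6 \<longrightarrow>
      (\<exists>u v U V \<phi>1 \<phi>2. resolvent_solution \<rho>1 \<rho>2 k1 k2 L \<alpha> \<eta> lam f1 f2 f3 f4 f5 f6 u v U V \<phi>1 \<phi>2))"

end

theory Submission
  imports Defs
begin


lemma Icc_lmeasurable: "{a..b::real} \<in> lmeasurable" by simp

lemma norm_le_1_plus_sq: "norm (z::complex) \<le> 1 + (cmod z)^2"
proof (cases "cmod z \<le> 1")
  case True then show ?thesis by (smt (verit) zero_le_power2)
next
  case False
  then have "cmod z \<le> cmod z * cmod z" by (simp add: mult_le_cancel_left1)
  then show ?thesis by (simp add: power2_eq_square)
qed

lemma L2_integrable_Icc:
  fixes f :: "real \<Rightarrow> complex"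
  assumes "L2 {a..b} f" shows "integrable (lebesgue_on {a..b}) f"
proof -
  interpret finite_measure "lebesgue_on {a..b}" by (rule finite_measure_lebesgue_on) simp
  have "integrable (lebesgue_on {a..b}) (\<lambda>x. 1 + (cmod (f x))^2)"
    using assms by (auto simp: L2_def)
  then show ?thesis
  proof (rule Bochner_Integration.integrable_bound)
    show "f \<in> borel_measurable (lebesgue_on {a..b})" using assms by (simp add: L2_def)
    show "AE x in lebesgue_on {a..b}. norm (f x) \<le> norm (1 + (cmod (f x))\<^sup>2)"
      using norm_le_1_plus_sq by (auto intro!: AE_I2)
  qed
qed

lemma integrable_on_iff_absint:
  fixes f :: "real \<Rightarrow> complex"
  shows "integrable (lebesgue_on {a..b}) f \<longleftrightarrow> f absolutely_integrable_on {a..b}"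
  by (simp add: integrable_restrict_space set_integrable_def)

lemma L2_absint:
  fixes f :: "real \<Rightarrow> complex"
  assumes "L2 {a..b} f" shows "f absolutely_integrable_on {a..b}"
  using L2_integrable_Icc[OF assms] integrable_on_iff_absint by blast

lemma lint_eq_hk:
  fixes f :: "real \<Rightarrow> complex"
  assumes "f absolutely_integrable_on {a..x}"
  shows "integral\<^sup>L (lebesgue_on {a..x}) f = integral {a..x} f"
  using assms by (simp add: integral_restrict_space set_lebesgue_integral_eq_integral(2)[symmetric] set_lebesgue_integral_def)

definition AC :: "real \<Rightarrow> real \<Rightarrow> (real \<Rightarrow> complex) \<Rightarrow> (real \<Rightarrow> complex) \<Rightarrow> bool" where
  "AC a b u g \<longleftrightarrow> g absolutely_integrable_on {a..b} \<and> (\<forall>x\<in>{a..b}. u x = u a + integral {a..x} g)"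

lemma hwd_iff: "has_weak_deriv a b u g \<longleftrightarrow> L2 {a..b} g \<and> AC a b u g"
proof
  assume h: "has_weak_deriv a b u g"
  then have L: "L2 {a..b} g" unfolding has_weak_deriv_def by blast
  have ai: "g absolutely_integrable_on {a..b}" using L2_absint[OF L] .
  have "u x = u a + integral {a..x} g" if "x \<in> {a..b}" for x
  proof -
    have "{a..x} \<subseteq> {a..b}" using that by auto
    then have "g absolutely_integrable_on {a..x}"
      using absolutely_integrable_on_subinterval[OF ai] by blast
    moreover have "u x = u a + integral\<^sup>L (lebesgue_on {a..x}) g"
      using h that unfolding has_weak_deriv_def by blast
    ultimately show ?thesis using lint_eq_hk by metis
  qed
  then show "L2 {a..b} g \<and> AC a b u g" using L ai unfolding AC_def by blast
next
  assume h: "L2 {a..b} g \<and> AC a b u g"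
  have "u x = u a + integral\<^sup>L (lebesgue_on {a..x}) g" if "x \<in> {a..b}" for x
  proof -
    have "{a..x} \<subseteq> {a..b}" using that by auto
    moreover have "g absolutely_integrable_on {a..b}" using h unfolding AC_def by blast
    ultimately have "g absolutely_integrable_on {a..x}"
      using absolutely_integrable_on_subinterval by blast
    moreover have "u x = u a + integral {a..x} g" using h that unfolding AC_def by blast
    ultimately show ?thesis using lint_eq_hk by metis
  qed
  then show "has_weak_deriv a b u g" using h unfolding has_weak_deriv_def by blast
qed



lemma integrable_prod_lborel:
  fixes f g :: "real \<Rightarrow> real"
  assumes f: "integrable lborel f" and g: "integrable lborel g"
  shows "integrable (lborel \<Otimes>\<^sub>M lborel) (\<lambda>p. f (fst p) * g (snd p))"
proof (rule integrableI_bounded)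
  have [measurable]: "f \<in> borel_measurable lborel" "g \<in> borel_measurable lborel"
    using f g by auto
  show "(\<lambda>p. f (fst p) * g (snd p)) \<in> borel_measurable (lborel \<Otimes>\<^sub>M lborel)" by measurable
  have "(\<integral>\<^sup>+ p. ennreal (norm (f (fst p) * g (snd p))) \<partial>(lborel \<Otimes>\<^sub>M lborel))
      = (\<integral>\<^sup>+ x. \<integral>\<^sup>+ y. ennreal (norm (f x * g y)) \<partial>lborel \<partial>lborel)"
    by (subst lborel.nn_integral_fst[symmetric]) (auto simp: case_prod_beta)
  also have "\<dots> = (\<integral>\<^sup>+ x. ennreal (norm (f x)) * (\<integral>\<^sup>+ y. ennreal (norm (g y)) \<partial>lborel) \<partial>lborel)"
  proof (intro nn_integral_cong)
    fix x
    have m: "(\<lambda>y. ennreal (norm (g y))) \<in> borel_measurable lborel" by measurable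
    show "(\<integral>\<^sup>+ y. ennreal (norm (f x * g y)) \<partial>lborel) = ennreal (norm (f x)) * (\<integral>\<^sup>+ y. ennreal (norm (g y)) \<partial>lborel)"
      by (simp only: norm_mult ennreal_mult norm_ge_zero nn_integral_cmult[OF m, symmetric])
  qed
  also have "\<dots> = (\<integral>\<^sup>+ x. ennreal (norm (f x)) \<partial>lborel) * (\<integral>\<^sup>+ y. ennreal (norm (g y)) \<partial>lborel)"
    by (simp add: nn_integral_multc)
  also have "\<dots> < \<infinity>"
    using f g by (simp add: integrable_iff_bounded ennreal_mult_less_top)
  finally show "(\<integral>\<^sup>+ p. ennreal (norm (f (fst p) * g (snd p))) \<partial>(lborel \<Otimes>\<^sub>M lborel)) < \<infinity>" .
qed



lemma borel_version:
  fixes f :: "real \<Rightarrow> complex"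
  assumes "f absolutely_integrable_on S"
  shows "\<exists>g. g \<in> borel_measurable lborel \<and> negligible {x\<in>S. f x \<noteq> g x}"
proof -
  define F where "F x = indicator S x *\<^sub>R f x" for x
  have Fm: "F \<in> borel_measurable lebesgue"
    using assms unfolding set_integrable_def F_def by (rule borel_measurable_integrable)
  have "(\<lambda>x. Re (F x)) \<in> borel_measurable (completion lborel)" using Fm by measurable
  from completion_ex_borel_measurable_real[OF this]
  obtain g1 where g1: "g1 \<in> borel_measurable lborel" "AE x in lborel. Re (F x) = g1 x" by blast
  have "(\<lambda>x. Im (F x)) \<in> borel_measurable (completion lborel)" using Fm by measurable
  from completion_ex_borel_measurable_real[OF this]
  obtain g2 where g2: "g2 \<in> borel_measurable lborel" "AE x in lborel. Im (F x) = g2 x" by blast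
  define g where "g x = Complex (g1 x) (g2 x)" for x
  have gm: "g \<in> borel_measurable lborel"
    unfolding g_def using g1(1) g2(1) by (simp add: borel_measurable_complex_iff)
  have "AE x in lborel. F x = g x"
    using g1(2) g2(2) by eventually_elim (simp add: g_def complex_eq_iff)
  then have "AE x in lebesgue. F x = g x" by (rule AE_completion)
  then obtain N where N: "{x \<in> space lebesgue. \<not> F x = g x} \<subseteq> N" "emeasure lebesgue N = 0" "N \<in> sets lebesgue"
    by (rule AE_E)
  have "negligible N" using N by (simp add: negligible_iff_null_sets null_sets_def)
  moreover have "{x\<in>S. f x \<noteq> g x} \<subseteq> N" using N(1) by (auto simp: F_def)
  ultimately have "negligible {x\<in>S. f x \<noteq> g x}" by (rule negligible_subset)
  with gm show ?thesis by blast
qed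



lemma set_integrable_bdd_mult:
  fixes g \<alpha> :: "real \<Rightarrow> complex"
  assumes "set_integrable lborel S \<alpha>" "g \<in> borel_measurable lborel" "\<And>t. t \<in> S \<Longrightarrow> norm (g t) \<le> K"
  shows "set_integrable lborel S (\<lambda>t. g t * \<alpha> t)"
  unfolding set_integrable_def
proof (rule Bochner_Integration.integrable_bound)
  show "integrable lborel (\<lambda>t. K *\<^sub>R (indicator S t *\<^sub>R \<alpha> t))"
    using assms(1) unfolding set_integrable_def by (rule integrable_scaleR_right)
  have m: "(\<lambda>t. indicator S t *\<^sub>R \<alpha> t) \<in> borel_measurable lborel"
    using assms(1) unfolding set_integrable_def by (rule borel_measurable_integrable)
  then show "(\<lambda>t. indicator S t *\<^sub>R (g t * \<alpha> t)) \<in> borel_measurable lborel"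
  proof -
    have "(\<lambda>t. indicator S t *\<^sub>R (g t * \<alpha> t)) = (\<lambda>t. g t * (indicator S t *\<^sub>R \<alpha> t))"
      by (simp add: fun_eq_iff)
    then show ?thesis by (simp only:) (rule borel_measurable_times[OF assms(2) m])
  qed
  show "AE t in lborel. norm (indicator S t *\<^sub>R (g t * \<alpha> t)) \<le> norm (K *\<^sub>R (indicator S t *\<^sub>R \<alpha> t))"
  proof (rule AE_I2)
    fix t
    show "norm (indicator S t *\<^sub>R (g t * \<alpha> t)) \<le> norm (K *\<^sub>R (indicator S t *\<^sub>R \<alpha> t))"
    proof (cases "t \<in> S")
      case True
      then have "norm (g t) \<le> K" by (rule assms(3))
      then have "norm (g t) * norm (\<alpha> t) \<le> \<bar>K\<bar> * norm (\<alpha> t)"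
        by (intro mult_right_mono) auto
      then show ?thesis using True by (simp add: norm_mult)
    qed simp
  qed
qed

lemma ibp_core:
  fixes P P' \<alpha> :: "real \<Rightarrow> complex"
  assumes P: "\<And>t. (P has_vector_derivative P' t) (at t)" and cP': "continuous_on UNIV P'"
    and \<alpha>m: "\<alpha> \<in> borel_measurable lborel" and \<alpha>i: "set_integrable lborel {a..x} \<alpha>" and ax: "a \<le> x"
  shows "integral {a..x} (\<lambda>t. P' t * integral {a..t} \<alpha> + P t * \<alpha> t) = P x * integral {a..x} \<alpha>"
proof -
  define B where "B t = integral {a..t} \<alpha>" for t
  have P'm[measurable]: "P' \<in> borel_measurable lborel"
    using borel_measurable_continuous_onI[OF cP'] by (simp add: measurable_lborel2)
  note [measurable] = \<alpha>m
  have \<alpha>hk: "\<alpha> integrable_on {a..x}" using \<alpha>i by (rule set_borel_integral_eq_integral(1))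
  have \<alpha>sub: "set_integrable lborel {c..d} \<alpha>" if "a \<le> c" "d \<le> x" for c d
    using set_integrable_subset[OF \<alpha>i] that by auto
  have contP: "continuous_on UNIV P"
    using P by (meson continuous_at_imp_continuous_on has_vector_derivative_continuous)
  have Pm[measurable]: "P \<in> borel_measurable lborel"
    using borel_measurable_continuous_onI[OF contP] by (simp add: measurable_lborel2)
  have "bounded (P' ` {a..x})"
    by (rule compact_imp_bounded[OF compact_continuous_image[OF continuous_on_subset[OF cP'] compact_Icc]]) simp
  then obtain M where M: "\<And>s. s \<in> {a..x} \<Longrightarrow> norm (P' s) \<le> M" unfolding bounded_iff by blast
  have "bounded (P ` {a..x})"
    by (rule compact_imp_bounded[OF compact_continuous_image[OF continuous_on_subset[OF contP] compact_Icc]]) simp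
  then obtain K2 where K2: "\<And>t. t \<in> {a..x} \<Longrightarrow> norm (P t) \<le> K2" unfolding bounded_iff by blast
  have M0: "0 \<le> M" using M[of a] ax by (meson atLeastAtMost_iff norm_ge_zero order.trans order_refl)
  have FTC: "integral {a..t} P' = P t - P a" if "a \<le> t" for t
    by (rule integral_unique, rule fundamental_theorem_of_calculus[OF that])
       (auto intro: has_vector_derivative_at_within P)
  have P'i: "set_integrable lborel {c..d} P'" for c d
    by (rule borel_integrable_atLeastAtMost') (rule continuous_on_subset[OF cP'], simp)
  have Bcont: "continuous_on {a..x} B"
    unfolding B_def using \<alpha>hk by (rule indefinite_integral_continuous_1)
  have Bsplit: "integral {s..x} \<alpha> = B x - B s" if "a \<le> s" "s \<le> x" for s
    using Henstock_Kurzweil_Integration.integral_combine[OF that \<alpha>hk] unfolding B_def by (simp add: algebra_simps)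

  define h where "h s t = (if a \<le> s \<and> s \<le> t \<and> t \<le> x then P' s * \<alpha> t else 0)" for s t
  have hm: "(\<lambda>(s, t). h s t) \<in> borel_measurable (lborel \<Otimes>\<^sub>M lborel)"
    unfolding h_def case_prod_beta by measurable
  have hint: "integrable (lborel \<Otimes>\<^sub>M lborel) (\<lambda>(s, t). h s t)"
  proof (rule Bochner_Integration.integrable_bound)
    have i1: "integrable lborel (\<lambda>s. M * indicator {a..x} s :: real)"
      by (intro integrable_mult_right integrable_real_indicator) (auto simp: emeasure_lborel_Icc_eq)
    have i2: "integrable lborel (\<lambda>t. norm (indicator {a..x} t *\<^sub>R \<alpha> t))"
      using \<alpha>i unfolding set_integrable_def by (rule integrable_norm)
    show "integrable (lborel \<Otimes>\<^sub>M lborel) (\<lambda>p. (M * indicator {a..x} (fst p)) * norm (indicator {a..x} (snd p) *\<^sub>R \<alpha> (snd p)))"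
      by (rule integrable_prod_lborel[OF i1 i2])
    show "(\<lambda>(s, t). h s t) \<in> borel_measurable (lborel \<Otimes>\<^sub>M lborel)" by (rule hm)
    show "AE p in lborel \<Otimes>\<^sub>M lborel. norm (case p of (s, t) \<Rightarrow> h s t)
       \<le> norm (M * indicator {a..x} (fst p) * norm (indicator {a..x} (snd p) *\<^sub>R \<alpha> (snd p)))"
    proof (rule AE_I2, clarify)
      fix s t
      show "norm (h s t) \<le> norm (M * indicator {a..x} (fst (s,t)) * norm (indicator {a..x} (snd (s,t)) *\<^sub>R \<alpha> (snd (s,t))))"
      proof (cases "a \<le> s \<and> s \<le> t \<and> t \<le> x")
        case True
        then have "norm (P' s) \<le> M" by (intro M) auto
        then have "norm (P' s) * norm (\<alpha> t) \<le> M * norm (\<alpha> t)" by (intro mult_right_mono) auto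
        then show ?thesis using True M0 by (simp add: h_def norm_mult)
      next
        case False
        then have "h s t = 0" unfolding h_def by meson
        then show ?thesis by simp
      qed
    qed
  qed
  have Fub: "(LBINT t. LBINT s. h s t) = (LBINT s. LBINT t. h s t)"
    using lborel_pair.Fubini_integral[OF hint] .
  have inner1: "(LBINT s. h s t) = indicator {a..x} t *\<^sub>R ((P t - P a) * \<alpha> t)" for t
  proof (cases "a \<le> t \<and> t \<le> x")
    case True
    have "(LBINT s. h s t) = (LBINT s. (indicator {a..t} s *\<^sub>R P' s) * \<alpha> t)"
      using True by (intro Bochner_Integration.integral_cong) (auto simp: h_def indicator_def)
    also have "\<dots> = (LBINT s. indicator {a..t} s *\<^sub>R P' s) * \<alpha> t"
      by (rule integral_mult_left_zero)
    also have "(LBINT s. indicator {a..t} s *\<^sub>R P' s) = integral {a..t} P'"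
      using set_borel_integral_eq_integral(2)[OF P'i] by (simp add: set_lebesgue_integral_def)
    finally show ?thesis using True FTC[of t] by simp
  next
    case False
    then have "h s t = 0" for s by (auto simp: h_def)
    then show ?thesis using False by simp
  qed
  have inner2: "(LBINT t. h s t) = indicator {a..x} s *\<^sub>R (P' s * (B x - B s))" for s
  proof (cases "a \<le> s \<and> s \<le> x")
    case True
    have "(LBINT t. h s t) = (LBINT t. P' s * (indicator {s..x} t *\<^sub>R \<alpha> t))"
      using True by (intro Bochner_Integration.integral_cong) (auto simp: h_def indicator_def)
    also have "\<dots> = P' s * (LBINT t. indicator {s..x} t *\<^sub>R \<alpha> t)"
      by (rule integral_mult_right_zero)
    also have "(LBINT t. indicator {s..x} t *\<^sub>R \<alpha> t) = integral {s..x} \<alpha>"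
      using set_borel_integral_eq_integral(2)[OF \<alpha>sub[of s x]] True by (simp add: set_lebesgue_integral_def)
    finally show ?thesis using True Bsplit[of s] by simp
  next
    case False
    then have "h s t = 0" for t by (auto simp: h_def)
    then show ?thesis using False by simp
  qed
  have c1: "continuous_on {a..x} (\<lambda>s. P' s * (B x - B s))"
    by (intro continuous_intros continuous_on_subset[OF cP'] Bcont) auto
  have c2: "continuous_on {a..x} (\<lambda>s. P' s * B s)"
    by (intro continuous_intros continuous_on_subset[OF cP'] Bcont) auto
  have K: "norm (P t - P a) \<le> K2 + norm (P a)" if "t \<in> {a..x}" for t
    using K2[OF that] norm_triangle_ineq4[of "P t" "P a"] by linarith
  have si1: "set_integrable lborel {a..x} (\<lambda>t. (P t - P a) * \<alpha> t)"
    by (rule set_integrable_bdd_mult[OF \<alpha>i _ K]) measurable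
  have LHS: "(LBINT t. LBINT s. h s t) = integral {a..x} (\<lambda>t. (P t - P a) * \<alpha> t)"
    using set_borel_integral_eq_integral(2)[OF si1] by (simp add: inner1 set_lebesgue_integral_def)
  have RHS: "(LBINT s. LBINT t. h s t) = integral {a..x} (\<lambda>s. P' s * (B x - B s))"
    using set_borel_integral_eq_integral(2)[OF borel_integrable_atLeastAtMost'[OF c1]]
    by (simp add: inner2 set_lebesgue_integral_def)
  have Pai: "(\<lambda>t. P t * \<alpha> t) integrable_on {a..x}"
  proof -
    have "set_integrable lborel {a..x} (\<lambda>t. P t * \<alpha> t)"
      by (rule set_integrable_bdd_mult[OF \<alpha>i _ K2]) measurable
    then show ?thesis by (rule set_borel_integral_eq_integral(1))
  qed
  have e1: "integral {a..x} (\<lambda>t. (P t - P a) * \<alpha> t) = integral {a..x} (\<lambda>t. P t * \<alpha> t) - P a * B x"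
  proof -
    have "integral {a..x} (\<lambda>t. (P t - P a) * \<alpha> t) = integral {a..x} (\<lambda>t. P t * \<alpha> t - P a * \<alpha> t)"
      by (simp add: algebra_simps)
    also have "\<dots> = integral {a..x} (\<lambda>t. P t * \<alpha> t) - integral {a..x} (\<lambda>t. P a * \<alpha> t)"
      by (rule integral_diff[OF Pai integrable_on_mult_right[OF \<alpha>hk]])
    finally show ?thesis by (simp add: B_def)
  qed
  have P'B: "(\<lambda>s. P' s * B s) integrable_on {a..x}" by (rule integrable_continuous_interval[OF c2])
  have P'hk: "P' integrable_on {a..x}" using set_borel_integral_eq_integral(1)[OF P'i] .
  have e2: "integral {a..x} (\<lambda>s. P' s * (B x - B s)) = (P x - P a) * B x - integral {a..x} (\<lambda>s. P' s * B s)"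
  proof -
    have "integral {a..x} (\<lambda>s. P' s * (B x - B s)) = integral {a..x} (\<lambda>s. P' s * B x - P' s * B s)"
      by (simp add: algebra_simps)
    also have "\<dots> = integral {a..x} (\<lambda>s. P' s * B x) - integral {a..x} (\<lambda>s. P' s * B s)"
      by (rule integral_diff[OF integrable_on_mult_left[OF P'hk] P'B])
    finally show ?thesis using FTC[OF ax] by (simp add: integral_mult_right)
  qed
  have "integral {a..x} (\<lambda>t. P' t * B t + P t * \<alpha> t) = integral {a..x} (\<lambda>t. P' t * B t) + integral {a..x} (\<lambda>t. P t * \<alpha> t)"
    by (rule integral_add[OF P'B Pai])
  also have "\<dots> = P x * B x"
  proof -
    have "integral {a..x} (\<lambda>t. (P t - P a) * \<alpha> t) = integral {a..x} (\<lambda>s. P' s * (B x - B s))"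
      using Fub LHS RHS by simp
    then have E: "integral {a..x} (\<lambda>t. P t * \<alpha> t) - P a * B x = (P x - P a) * B x - integral {a..x} (\<lambda>s. P' s * B s)"
      using e1 e2 by simp
    have gen: "\<And>X Y c d e::complex. X - c * e = (d - c) * e - Y \<Longrightarrow> Y + X = d * e"
      by (simp add: algebra_simps)
    show ?thesis by (rule gen[OF E])
  qed
  finally show ?thesis by (simp add: B_def)
qed


lemma AC_cont:
  assumes "AC a b u g" shows "continuous_on {a..b} u"
proof -
  have gi: "g integrable_on {a..b}" using assms unfolding AC_def by (blast intro: set_lebesgue_integral_eq_integral(1))
  have "continuous_on {a..b} (\<lambda>x. u a + integral {a..x} g)"
    by (intro continuous_intros indefinite_integral_continuous_1 gi)
  moreover have "\<And>x. x \<in> {a..b} \<Longrightarrow> u x = u a + integral {a..x} g" using assms unfolding AC_def by blast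
  ultimately show ?thesis using continuous_on_eq by (metis (no_types, lifting))
qed

lemma AC_add:
  assumes "AC a b u g" "AC a b v h"
  shows "AC a b (\<lambda>x. u x + v x) (\<lambda>x. g x + h x)"
proof -
  have gi: "g absolutely_integrable_on {a..b}" and hi: "h absolutely_integrable_on {a..b}"
    using assms unfolding AC_def by blast+
  have "integral {a..x} (\<lambda>t. g t + h t) = integral {a..x} g + integral {a..x} h" if "x \<in> {a..b}" for x
  proof (rule integral_add)
    show "g integrable_on {a..x}" using absolutely_integrable_on_subinterval[OF gi] that
      by (auto intro: set_lebesgue_integral_eq_integral(1))
    show "h integrable_on {a..x}" using absolutely_integrable_on_subinterval[OF hi] that
      by (auto intro: set_lebesgue_integral_eq_integral(1))
  qed
  then have "u x + v x = (u a + v a) + integral {a..x} (\<lambda>t. g t + h t)" if "x \<in> {a..b}" for x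
  proof -
    have "u x = u a + integral {a..x} g" "v x = v a + integral {a..x} h"
      using assms that unfolding AC_def by blast+
    then show ?thesis using \<open>\<And>x. x \<in> {a..b} \<Longrightarrow> integral {a..x} (\<lambda>t. g t + h t) = _\<close>[OF that]
      by (simp only: ) (simp add: algebra_simps)
  qed
  moreover have "(\<lambda>x. g x + h x) absolutely_integrable_on {a..b}" by (rule set_integral_add(1)[OF gi hi])
  ultimately show ?thesis unfolding AC_def by blast
qed

lemma AC_cmult:
  assumes "AC a b u g"
  shows "AC a b (\<lambda>x. c * u x) (\<lambda>x. c * g x)"
proof -
  have "(\<lambda>x. c * g x) absolutely_integrable_on {a..b}"
    using assms unfolding AC_def by (intro set_integrable_mult_right) blast
  moreover have "c * u x = c * u a + integral {a..x} (\<lambda>x. c * g x)" if "x \<in> {a..b}" for x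
  proof -
    have "u x = u a + integral {a..x} g" using assms that unfolding AC_def by blast
    then show ?thesis by (simp only: integral_mult_right distrib_left)
  qed
  ultimately show ?thesis unfolding AC_def by blast
qed

lemma AC_const: "AC a b (\<lambda>x. c) (\<lambda>x. 0)"
  unfolding AC_def by simp

lemma AC_cong:
  assumes "AC a b u g" "\<And>x. x \<in> {a..b} \<Longrightarrow> u x = v x" "\<And>x. x \<in> {a..b} \<Longrightarrow> g x = h x"
  shows "AC a b v h"
proof -
  have gi: "g absolutely_integrable_on {a..b}" using assms(1) unfolding AC_def by blast
  have "h absolutely_integrable_on {a..b}"
    by (rule absolutely_integrable_spike[OF gi negligible_empty]) (use assms(3) in auto)
  moreover have "v x = v a + integral {a..x} h" if x: "x \<in> {a..b}" for x
  proof -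
    have "integral {a..x} h = integral {a..x} g"
      by (rule integral_spike[of "{}"]) (use assms(3) x in auto)
    moreover have "u x = u a + integral {a..x} g" using assms(1) x unfolding AC_def by blast
    moreover have "u x = v x" using assms(2) x by blast
    moreover have "u a = v a" using assms(2) x by (metis atLeastAtMost_iff order_refl order_trans)
    ultimately show ?thesis by simp
  qed
  ultimately show ?thesis unfolding AC_def by blast
qed

lemma AC_smooth:
  assumes P: "\<And>t. (P has_vector_derivative P' t) (at t)" and cP': "continuous_on UNIV P'"
  shows "AC a b P P'"
proof -
  have "continuous_on (cbox a b) P'" using continuous_on_subset[OF cP'] by blast
  then have "P' absolutely_integrable_on cbox a b" by (rule absolutely_integrable_continuous)
  then have "P' absolutely_integrable_on {a..b}" by simp
  moreover have "P x = P a + integral {a..x} P'" if "x \<in> {a..b}" for x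
  proof -
    have "(P' has_integral P x - P a) {a..x}"
      by (rule fundamental_theorem_of_calculus) (use that in \<open>auto intro: has_vector_derivative_at_within P\<close>)
    then show ?thesis by (simp add: integral_unique)
  qed
  ultimately show ?thesis unfolding AC_def by blast
qed

lemma absint_bdd_mult:
  fixes P \<alpha> :: "real \<Rightarrow> complex"
  assumes "continuous_on UNIV P" "\<alpha> absolutely_integrable_on {a..b}"
  shows "(\<lambda>t. P t * \<alpha> t) absolutely_integrable_on {a..b}"
proof (rule absolutely_integrable_bounded_measurable_product[OF bilinear_times])
  show "P \<in> borel_measurable (lebesgue_on {a..b})"
    by (rule continuous_imp_measurable_on_sets_lebesgue[OF continuous_on_subset[OF assms(1)]]) auto
  show "bounded (P ` {a..b})"
    by (rule compact_imp_bounded[OF compact_continuous_image[OF continuous_on_subset[OF assms(1)] compact_Icc]]) simp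
qed (use assms in auto)

lemma absint_cont:
  fixes P :: "real \<Rightarrow> complex"
  assumes "continuous_on {a..b} P"
  shows "P absolutely_integrable_on {a..b}"
proof -
  have "continuous_on (cbox a b) P" using assms by simp
  then have "P absolutely_integrable_on cbox a b" by (rule absolutely_integrable_continuous)
  then show ?thesis by simp
qed

lemma AC_mult_smooth:
  fixes P P' A \<alpha> :: "real \<Rightarrow> complex"
  assumes A: "AC a b A \<alpha>" and P: "\<And>t. (P has_vector_derivative P' t) (at t)" and cP': "continuous_on UNIV P'"
  shows "AC a b (\<lambda>t. P t * A t) (\<lambda>t. P' t * A t + P t * \<alpha> t)"
proof -
  have \<alpha>i: "\<alpha> absolutely_integrable_on {a..b}" using A unfolding AC_def by blast
  obtain \<alpha>2 where \<alpha>2m[measurable]: "\<alpha>2 \<in> borel_measurable lborel" and N: "negligible {x\<in>{a..b}. \<alpha> x \<noteq> \<alpha>2 x}"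
    using borel_version[OF \<alpha>i] by blast
  have \<alpha>2i: "\<alpha>2 absolutely_integrable_on {a..b}"
    by (rule absolutely_integrable_spike[OF \<alpha>i N]) auto
  have \<alpha>2l: "set_integrable lborel {a..b} \<alpha>2"
  proof -
    have m: "(\<lambda>x. indicator {a..b} x *\<^sub>R \<alpha>2 x) \<in> borel_measurable lborel" by measurable
    show ?thesis using \<alpha>2i unfolding set_integrable_def using integrable_completion[OF m] by simp
  qed
  have contP: "continuous_on UNIV P"
    using P by (meson continuous_at_imp_continuous_on has_vector_derivative_continuous)
  have Acont: "continuous_on {a..b} A" by (rule AC_cont[OF A])
  have ACP: "AC a b P P'" by (rule AC_smooth[OF P cP'])
  have i1: "(\<lambda>t. P' t * A t) absolutely_integrable_on {a..b}"
    by (rule absint_cont) (intro continuous_intros continuous_on_subset[OF cP'] Acont, simp)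
  have i2: "(\<lambda>t. P t * \<alpha> t) absolutely_integrable_on {a..b}" by (rule absint_bdd_mult[OF contP \<alpha>i])
  have I: "(\<lambda>t. P' t * A t + P t * \<alpha> t) absolutely_integrable_on {a..b}"
    by (rule set_integral_add(1)[OF i1 i2])
  have main: "P x * A x = P a * A a + integral {a..x} (\<lambda>t. P' t * A t + P t * \<alpha> t)" if x: "x \<in> {a..b}" for x
  proof -
    have ax: "a \<le> x" using x by simp
    have sub: "{a..x} \<subseteq> {a..b}" using x by auto
    have Nx: "negligible {t\<in>{a..x}. \<alpha> t \<noteq> \<alpha>2 t}" by (rule negligible_subset[OF N]) (use sub in auto)
    have Bt: "integral {a..t} \<alpha> = integral {a..t} \<alpha>2" if "t \<in> {a..x}" for t
      by (rule integral_spike[OF N]) (use that x in auto)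
    have I1: "(\<lambda>t. P' t * A t + P t * \<alpha> t) integrable_on {a..x}"
      using absolutely_integrable_on_subinterval[OF I sub] by (rule set_lebesgue_integral_eq_integral(1))
    have P'i: "P' integrable_on {a..x}"
      using ACP sub unfolding AC_def by (blast intro: set_lebesgue_integral_eq_integral(1) absolutely_integrable_on_subinterval)
    have I2: "(\<lambda>t. P' t * A a) integrable_on {a..x}" by (rule integrable_on_mult_left[OF P'i])
    have "integral {a..x} (\<lambda>t. P' t * A t + P t * \<alpha> t) - integral {a..x} (\<lambda>t. P' t * A a)
        = integral {a..x} (\<lambda>t. (P' t * A t + P t * \<alpha> t) - P' t * A a)"
      by (rule integral_diff[OF I1 I2, symmetric])
    also have "\<dots> = integral {a..x} (\<lambda>t. P' t * integral {a..t} \<alpha>2 + P t * \<alpha>2 t)"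
    proof (rule integral_spike[OF Nx])
      fix t assume t: "t \<in> {a..x} - {t \<in> {a..x}. \<alpha> t \<noteq> \<alpha>2 t}"
      then have tb: "t \<in> {a..b}" and e: "\<alpha> t = \<alpha>2 t" using sub by auto
      have "A t = A a + integral {a..t} \<alpha>" using A tb unfolding AC_def by blast
      then show "P' t * integral {a..t} \<alpha>2 + P t * \<alpha>2 t = P' t * A t + P t * \<alpha> t - P' t * A a"
        using Bt[of t] t e by (simp add: algebra_simps)
    qed
    also have "\<dots> = P x * integral {a..x} \<alpha>2"
      by (rule ibp_core[OF P cP' \<alpha>2m set_integrable_subset[OF \<alpha>2l] ax]) (use sub in auto)
    finally have E1: "integral {a..x} (\<lambda>t. P' t * A t + P t * \<alpha> t) - integral {a..x} (\<lambda>t. P' t * A a)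
        = P x * integral {a..x} \<alpha>" using Bt[of x] x by simp
    have E2: "integral {a..x} (\<lambda>t. P' t * A a) = (P x - P a) * A a"
    proof -
      have "P x = P a + integral {a..x} P'" using ACP x unfolding AC_def by blast
      then show ?thesis by (simp add: integral_mult_left)
    qed
    have E3: "A x = A a + integral {a..x} \<alpha>" using A x unfolding AC_def by blast
    show ?thesis using E1 E2 E3 by (simp add: algebra_simps)
  qed
  show ?thesis unfolding AC_def using I main by blast
qed


definition Cf :: "complex \<Rightarrow> real \<Rightarrow> complex" where
  "Cf a x = (if a = 0 then 1 else (exp (csqrt a * of_real x) + exp (- (csqrt a * of_real x))) / 2)"

definition Sf :: "complex \<Rightarrow> real \<Rightarrow> complex" where
  "Sf a x = (if a = 0 then of_real x else (exp (csqrt a * of_real x) - exp (- (csqrt a * of_real x))) / (2 * csqrt a))"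

lemma Cf_deriv: "(Cf a has_vector_derivative a * Sf a x) (at x)"
proof (cases "a = 0")
  case True
  then show ?thesis unfolding Cf_def Sf_def by (simp add: has_vector_derivative_const)
next
  case False
  define s where "s = csqrt a"
  have s0: "s \<noteq> 0" using False by (simp add: s_def)
  have ss: "s * s = a" unfolding s_def by (metis power2_csqrt power2_eq_square)
  have "((\<lambda>z. (exp (s * z) + exp (- (s * z))) / 2) has_field_derivative
        (s * exp (s * of_real x) - s * exp (- (s * of_real x))) / 2) (at (of_real x))"
    by (auto intro!: derivative_eq_intros)
  then have "((\<lambda>t. (exp (s * of_real t) + exp (- (s * of_real t))) / 2) has_vector_derivative
        (s * exp (s * of_real x) - s * exp (- (s * of_real x))) / 2) (at x)"
    by (rule has_vector_derivative_real_field)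
  moreover have "(s * exp (s * of_real x) - s * exp (- (s * of_real x))) / 2 = a * Sf a x"
  proof -
    have Sx: "Sf a x = (exp (s * of_real x) - exp (- (s * of_real x))) / (2 * s)"
      using False unfolding Sf_def s_def by simp
    have "a * ((exp (s * of_real x) - exp (- (s * of_real x))) / (2 * s))
        = (s * s) * ((exp (s * of_real x) - exp (- (s * of_real x))) / (2 * s))" by (simp only: ss)
    also have "\<dots> = (s * exp (s * of_real x) - s * exp (- (s * of_real x))) / 2"
      using s0 by (simp add: field_simps)
    finally show ?thesis using Sx by simp
  qed
  ultimately show ?thesis using False unfolding Cf_def s_def by simp
qed

lemma Sf_deriv: "(Sf a has_vector_derivative Cf a x) (at x)"
proof (cases "a = 0")
  case True
  have "((\<lambda>z::complex. z) has_field_derivative 1) (at (of_real x))" by (rule DERIV_ident)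
  then have "((\<lambda>t. complex_of_real t) has_vector_derivative 1) (at x)"
    by (rule has_vector_derivative_real_field)
  then show ?thesis using True unfolding Cf_def Sf_def by simp
next
  case False
  define s where "s = csqrt a"
  have s0: "s \<noteq> 0" using False by (simp add: s_def)
  have "((\<lambda>z. (exp (s * z) - exp (- (s * z))) / (2 * s)) has_field_derivative
        (s * exp (s * of_real x) + s * exp (- (s * of_real x))) / (2 * s)) (at (of_real x))"
    using s0 by (auto intro!: derivative_eq_intros simp: field_simps)
  then have "((\<lambda>t. (exp (s * of_real t) - exp (- (s * of_real t))) / (2 * s)) has_vector_derivative
        (s * exp (s * of_real x) + s * exp (- (s * of_real x))) / (2 * s)) (at x)"
    by (rule has_vector_derivative_real_field)
  moreover have "(s * exp (s * of_real x) + s * exp (- (s * of_real x))) / (2 * s) = Cf a x"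
    using False s0 unfolding Cf_def s_def[symmetric] by (simp add: field_simps)
  ultimately show ?thesis using False unfolding Sf_def s_def by simp
qed

lemma Cf_cont: "continuous_on UNIV (Cf a)"
  using Cf_deriv by (meson continuous_at_imp_continuous_on has_vector_derivative_continuous)

lemma Sf_cont: "continuous_on UNIV (Sf a)"
  using Sf_deriv by (meson continuous_at_imp_continuous_on has_vector_derivative_continuous)

lemma Cf_0[simp]: "Cf a 0 = 1" by (simp add: Cf_def)
lemma Sf_0[simp]: "Sf a 0 = 0" by (simp add: Sf_def)

lemma Cf_Sf_id: "Cf a x * Cf a x - a * (Sf a x * Sf a x) = 1"
proof (cases "a = 0")
  case True then show ?thesis by (simp add: Cf_def)
next
  case False
  define s where "s = csqrt a"
  have s0: "s \<noteq> 0" using False by (simp add: s_def)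
  have ss: "a = s * s" unfolding s_def by (metis power2_csqrt power2_eq_square)
  define e where "e = exp (s * of_real x)"
  define f where "f = exp (- (s * of_real x))"
  have ef: "e * f = 1" unfolding e_def f_def by (simp add: exp_minus field_simps)
  have C: "Cf a x = (e + f) / 2" and S: "Sf a x = (e - f) / (2 * s)"
    using False unfolding Cf_def Sf_def e_def f_def s_def by simp_all
  have "Cf a x * Cf a x - a * (Sf a x * Sf a x) = (e + f) / 2 * ((e + f) / 2) - a * ((e - f) / (2 * s) * ((e - f) / (2 * s)))"
    by (simp only: C S)
  also have "a * ((e - f) / (2 * s) * ((e - f) / (2 * s))) = (e - f) * (e - f) / 4"
    unfolding ss using s0 by (simp add: field_simps)
  also have "(e + f) / 2 * ((e + f) / 2) - (e - f) * (e - f) / 4 = e * f"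
    by (simp add: field_simps)
  finally show ?thesis using ef by simp
qed

lemma Cf_shift_deriv: "((\<lambda>t. Cf a (t - p)) has_vector_derivative a * Sf a (x - p)) (at x)"
proof -
  have "((\<lambda>t. t - p) has_vector_derivative 1) (at x)"
    by (auto intro!: derivative_eq_intros simp: has_vector_derivative_def)
  from vector_diff_chain_at[OF this Cf_deriv[of a "x - p"]] show ?thesis by (simp add: o_def)
qed

lemma Sf_shift_deriv: "((\<lambda>t. Sf a (t - p)) has_vector_derivative Cf a (x - p)) (at x)"
proof -
  have "((\<lambda>t. t - p) has_vector_derivative 1) (at x)"
    by (auto intro!: derivative_eq_intros simp: has_vector_derivative_def)
  from vector_diff_chain_at[OF this Sf_deriv[of a "x - p"]] show ?thesis by (simp add: o_def)
qed

lemma Cf_shift_cont: "continuous_on UNIV (\<lambda>t. Cf a (t - p))"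
  using Cf_shift_deriv by (meson continuous_at_imp_continuous_on has_vector_derivative_continuous)

lemma Sf_shift_cont: "continuous_on UNIV (\<lambda>t. Sf a (t - p))"
  using Sf_shift_deriv by (meson continuous_at_imp_continuous_on has_vector_derivative_continuous)


lemma AC_diff:
  assumes "AC a b u g" "AC a b v h"
  shows "AC a b (\<lambda>x. u x - v x) (\<lambda>x. g x - h x)"
proof -
  have "AC a b (\<lambda>x. u x + (-1) * v x) (\<lambda>x. g x + (-1) * h x)"
    by (rule AC_add[OF assms(1) AC_cmult[OF assms(2)]])
  then show ?thesis by (rule AC_cong) simp_all
qed

lemma AC_indef:
  assumes "f absolutely_integrable_on {p..q}"
  shows "AC p q (\<lambda>x. integral {p..x} f) f"
  using assms unfolding AC_def by simp

lemma ode_particular: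
  fixes r :: "real \<Rightarrow> complex"
  assumes r: "r absolutely_integrable_on {p..q}"
  shows "\<exists>u g. AC p q u g \<and> AC p q g (\<lambda>x. a * u x + r x) \<and> u p = 0 \<and> g p = 0"
proof -
  define C where "C t = Cf a (t - p)" for t
  define S where "S t = Sf a (t - p)" for t
  have dC: "\<And>t. (C has_vector_derivative a * S t) (at t)" unfolding C_def S_def by (rule Cf_shift_deriv)
  have dS: "\<And>t. (S has_vector_derivative C t) (at t)" unfolding C_def S_def by (rule Sf_shift_deriv)
  have cC: "continuous_on UNIV C" unfolding C_def by (rule Cf_shift_cont)
  have cS: "continuous_on UNIV S" unfolding S_def by (rule Sf_shift_cont)
  have caS: "continuous_on UNIV (\<lambda>t. a * S t)" by (intro continuous_intros cS)
  have id: "C t * C t - a * (S t * S t) = 1" for t unfolding C_def S_def by (rule Cf_Sf_id)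
  define IC where "IC x = integral {p..x} (\<lambda>t. C t * r t)" for x
  define IS where "IS x = integral {p..x} (\<lambda>t. S t * r t)" for x
  have ACIC: "AC p q IC (\<lambda>t. C t * r t)"
    unfolding IC_def by (rule AC_indef[OF absint_bdd_mult[OF cC r]])
  have ACIS: "AC p q IS (\<lambda>t. S t * r t)"
    unfolding IS_def by (rule AC_indef[OF absint_bdd_mult[OF cS r]])
  define u where "u x = S x * IC x - C x * IS x" for x
  define g where "g x = C x * IC x - a * S x * IS x" for x
  have ACu: "AC p q u g"
  proof -
    have "AC p q (\<lambda>x. S x * IC x - C x * IS x)
           (\<lambda>x. (C x * IC x + S x * (C x * r x)) - (a * S x * IS x + C x * (S x * r x)))"
      by (rule AC_diff[OF AC_mult_smooth[OF ACIC dS cC] AC_mult_smooth[OF ACIS dC caS]])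
    then show ?thesis by (rule AC_cong) (simp_all add: u_def g_def algebra_simps)
  qed
  have ACg: "AC p q g (\<lambda>x. a * u x + r x)"
  proof -
    have m2: "\<And>t. ((\<lambda>t. a * S t) has_vector_derivative a * C t) (at t)"
      using dS by (intro has_vector_derivative_mult_right)
    have caC: "continuous_on UNIV (\<lambda>t. a * C t)" by (intro continuous_intros cC)
    have "AC p q (\<lambda>x. C x * IC x - (a * S x) * IS x)
           (\<lambda>x. (a * S x * IC x + C x * (C x * r x)) - (a * C x * IS x + a * S x * (S x * r x)))"
      by (rule AC_diff[OF AC_mult_smooth[OF ACIC dC caS] AC_mult_smooth[OF ACIS m2 caC]])
    then show ?thesis
    proof (rule AC_cong)
      fix x
      show "C x * IC x - a * S x * IS x = g x" by (simp add: g_def)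
      have "a * S x * IC x + C x * (C x * r x) - (a * C x * IS x + a * S x * (S x * r x))
          = a * (S x * IC x - C x * IS x) + (C x * C x - a * (S x * S x)) * r x"
        by (simp add: algebra_simps)
      then show "a * S x * IC x + C x * (C x * r x) - (a * C x * IS x + a * S x * (S x * r x)) = a * u x + r x"
        by (simp add: id u_def)
    qed
  qed
  have "IC p = 0" "IS p = 0" unfolding IC_def IS_def by simp_all
  then have "u p = 0" "g p = 0" by (simp_all add: u_def g_def)
  with ACu ACg show ?thesis by blast
qed


lemma energy:
  fixes w w' :: "real \<Rightarrow> complex"
  assumes dw: "\<And>t. (w has_vector_derivative w' t) (at t)"
    and dw': "\<And>t. (w' has_vector_derivative a * w t) (at t)" and pq: "p \<le> q"
  shows "a * of_real (integral {p..q} (\<lambda>t. (cmod (w t))\<^sup>2)) + of_real (integral {p..q} (\<lambda>t. (cmod (w' t))\<^sup>2))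
         = w' q * cnj (w q) - w' p * cnj (w p)"
proof -
  have cw: "continuous_on UNIV w" using dw by (meson continuous_at_imp_continuous_on has_vector_derivative_continuous)
  have cw': "continuous_on UNIV w'" using dw' by (meson continuous_at_imp_continuous_on has_vector_derivative_continuous)
  have h1: "(\<lambda>t. (cmod (w t))\<^sup>2) integrable_on {p..q}"
    by (intro integrable_continuous_interval continuous_intros continuous_on_subset[OF cw]) auto
  have h2: "(\<lambda>t. (cmod (w' t))\<^sup>2) integrable_on {p..q}"
    by (intro integrable_continuous_interval continuous_intros continuous_on_subset[OF cw']) auto
  have D: "((\<lambda>t. w' t * cnj (w t)) has_vector_derivative
            a * of_real ((cmod (w t))\<^sup>2) + of_real ((cmod (w' t))\<^sup>2)) (at t within {p..q})" for t
  proof -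
    have "((\<lambda>t. w' t * cnj (w t)) has_vector_derivative w' t * cnj (w' t) + a * w t * cnj (w t)) (at t within {p..q})"
      by (rule has_vector_derivative_mult[OF has_vector_derivative_at_within[OF dw'] has_vector_derivative_cnj[OF has_vector_derivative_at_within[OF dw]], simplified mult.assoc[symmetric]])
    moreover have "w' t * cnj (w' t) + a * w t * cnj (w t) = a * of_real ((cmod (w t))\<^sup>2) + of_real ((cmod (w' t))\<^sup>2)"
      by (simp only: complex_norm_square mult.assoc add.commute)
    ultimately show ?thesis by simp
  qed
  have "((\<lambda>t. a * of_real ((cmod (w t))\<^sup>2) + of_real ((cmod (w' t))\<^sup>2)) has_integral
          w' q * cnj (w q) - w' p * cnj (w p)) {p..q}"
    by (rule fundamental_theorem_of_calculus[OF pq D])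
  then have "integral {p..q} (\<lambda>t. a * of_real ((cmod (w t))\<^sup>2) + of_real ((cmod (w' t))\<^sup>2)) = w' q * cnj (w q) - w' p * cnj (w p)"
    by (rule integral_unique)
  moreover have "integral {p..q} (\<lambda>t. a * of_real ((cmod (w t))\<^sup>2) + of_real ((cmod (w' t))\<^sup>2))
      = a * of_real (integral {p..q} (\<lambda>t. (cmod (w t))\<^sup>2)) + of_real (integral {p..q} (\<lambda>t. (cmod (w' t))\<^sup>2))"
  proof -
    have i1: "integral {p..q} (\<lambda>t. complex_of_real ((cmod (w t))\<^sup>2)) = of_real (integral {p..q} (\<lambda>t. (cmod (w t))\<^sup>2))"
      using integral_linear[OF h1 bounded_linear_of_real] by (simp add: o_def)
    have i2: "integral {p..q} (\<lambda>t. complex_of_real ((cmod (w' t))\<^sup>2)) = of_real (integral {p..q} (\<lambda>t. (cmod (w' t))\<^sup>2))"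
      using integral_linear[OF h2 bounded_linear_of_real] by (simp add: o_def)
    have j1: "(\<lambda>t. complex_of_real ((cmod (w t))\<^sup>2)) integrable_on {p..q}"
      using integrable_linear[OF h1 bounded_linear_of_real] by (simp add: o_def)
    have j2: "(\<lambda>t. complex_of_real ((cmod (w' t))\<^sup>2)) integrable_on {p..q}"
      using integrable_linear[OF h2 bounded_linear_of_real] by (simp add: o_def)
    show ?thesis
      by (simp only: integral_add[OF integrable_on_mult_right[OF j1] j2] integral_mult_right i1 i2)
  qed
  ultimately show ?thesis by simp
qed

lemma det_nonzero:
  fixes a1 a2 :: complex and k1 k2 L :: real
  assumes k1: "k1 > 0" and k2: "k2 > 0" and L: "L > 0"
    and nd: "(a1 = 0 \<and> a2 = 0) \<or> (Im (of_real k1 * a1) = Im (of_real k2 * a2) \<and> Im (of_real k1 * a1) \<noteq> 0)"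
  shows "of_real k2 * Sf a1 L * Cf a2 L + of_real k1 * Cf a1 L * Sf a2 L \<noteq> 0"
proof (cases "a1 = 0 \<and> a2 = 0")
  case True
  then have "of_real k2 * Sf a1 L * Cf a2 L + of_real k1 * Cf a1 L * Sf a2 L = of_real (k2 * L + k1 * L)"
    by (simp add: Sf_def Cf_def)
  moreover have "k2 * L + k1 * L > 0" using k1 k2 L by (simp add: add_pos_pos)
  ultimately show ?thesis by (metis less_irrefl of_real_eq_0_iff)
next
  case False
  with nd have th: "Im (of_real k1 * a1) = Im (of_real k2 * a2)" "Im (of_real k1 * a1) \<noteq> 0" by auto
  show ?thesis
  proof
    assume D0: "of_real k2 * Sf a1 L * Cf a2 L + of_real k1 * Cf a1 L * Sf a2 L = 0"
    define c where "c = complex_of_real (k1 / k2)"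
    define v where "v t = Sf a1 L * Cf a2 t + c * Cf a1 L * Sf a2 t" for t
    define v' where "v' t = Sf a1 L * (a2 * Sf a2 t) + c * Cf a1 L * Cf a2 t" for t
    have dv: "(v has_vector_derivative v' t) (at t)" for t
      unfolding v_def v'_def
      by (intro has_vector_derivative_add has_vector_derivative_mult_right Cf_deriv Sf_deriv)
    have dv': "(v' has_vector_derivative a2 * v t) (at t)" for t
    proof -
      have "(v' has_vector_derivative Sf a1 L * (a2 * Cf a2 t) + c * Cf a1 L * (a2 * Sf a2 t)) (at t)"
        unfolding v'_def
        by (intro has_vector_derivative_add has_vector_derivative_mult_right Cf_deriv Sf_deriv)
      moreover have "Sf a1 L * (a2 * Cf a2 t) + c * Cf a1 L * (a2 * Sf a2 t) = a2 * v t"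
        by (simp add: v_def algebra_simps)
      ultimately show ?thesis by simp
    qed
    have vL: "v L = 0"
    proof -
      have "of_real k2 * v L = of_real k2 * Sf a1 L * Cf a2 L + of_real k1 * Cf a1 L * Sf a2 L"
        using k2 by (simp add: v_def c_def algebra_simps)
      then show ?thesis using D0 k2 by simp
    qed
    have v0: "v 0 = Sf a1 L" and v'0: "v' 0 = c * Cf a1 L" by (simp_all add: v_def v'_def)
    define K1 where "K1 = integral {0..L} (\<lambda>t. (cmod (Sf a1 t))\<^sup>2)"
    define J1 where "J1 = integral {0..L} (\<lambda>t. (cmod (Cf a1 t))\<^sup>2)"
    define K2 where "K2 = integral {0..L} (\<lambda>t. (cmod (v t))\<^sup>2)"
    define J2 where "J2 = integral {0..L} (\<lambda>t. (cmod (v' t))\<^sup>2)"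
    have E1: "a1 * of_real K1 + of_real J1 = Cf a1 L * cnj (Sf a1 L)"
      using energy[OF Sf_deriv Cf_deriv, of 0 L] L unfolding K1_def J1_def by simp
    have E2: "a2 * of_real K2 + of_real J2 = - (c * Cf a1 L * cnj (Sf a1 L))"
      using energy[OF dv dv', of 0 L] L vL v0 v'0 unfolding K2_def J2_def by simp
    have "of_real k1 * (a1 * of_real K1 + of_real J1) + of_real k2 * (a2 * of_real K2 + of_real J2) = 0"
      unfolding E1 E2 c_def using k2 by (simp add: field_simps)
    then have "Im (of_real k1 * (a1 * of_real K1 + of_real J1) + of_real k2 * (a2 * of_real K2 + of_real J2)) = 0"
      by simp
    then have "Im (of_real k1 * a1) * K1 + Im (of_real k2 * a2) * K2 = 0"
      by (simp add: algebra_simps)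
    then have "Im (of_real k1 * a1) * (K1 + K2) = 0" using th(1) by (simp add: algebra_simps)
    then have KK: "K1 + K2 = 0" using th(2) by simp
    have cS: "continuous_on UNIV (Sf a1)" by (rule Sf_cont)
    have cv: "continuous_on UNIV v" using dv by (meson continuous_at_imp_continuous_on has_vector_derivative_continuous)
    have K1n: "0 \<le> K1" unfolding K1_def
      by (intro integral_nonneg integrable_continuous_interval continuous_intros continuous_on_subset[OF cS]) auto
    have K2n: "0 \<le> K2" unfolding K2_def
      by (intro integral_nonneg integrable_continuous_interval continuous_intros continuous_on_subset[OF cv]) auto
    have "K1 = 0" using KK K1n K2n by linarith
    moreover have cK: "continuous_on {0..L} (\<lambda>t. (cmod (Sf a1 t))\<^sup>2)"
      by (intro continuous_intros continuous_on_subset[OF cS]) auto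
    ultimately have "\<forall>t\<in>{0..L}. (cmod (Sf a1 t))\<^sup>2 = 0"
      unfolding K1_def using integral_eq_0_iff[OF cK L] by simp
    then have S0: "\<And>t. t \<in> cbox 0 L \<Longrightarrow> (\<lambda>t. 0) t = Sf a1 t" by simp
    have d1: "(Sf a1 has_vector_derivative 1) (at 0 within cbox 0 L)"
      using has_vector_derivative_at_within[OF Sf_deriv[of a1 0]] by simp
    have d2: "(Sf a1 has_vector_derivative 0) (at 0 within cbox 0 L)"
    proof -
      have c0: "((\<lambda>t. 0) has_vector_derivative (0::complex)) (at 0 within cbox 0 L)" by (rule has_vector_derivative_const)
      show ?thesis
        by (rule has_vector_derivative_transform[OF _ _ c0]) (use L S0 in auto)
    qed
    have "(1::complex) = 0"
      by (rule vector_derivative_unique_within_closed_interval[OF L _ d1 d2]) (use L in simp)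
    then show False by simp
  qed
qed


lemma bvp:
  fixes a1 a2 :: complex and k1 k2 L :: real and r1 r2 :: "real \<Rightarrow> complex"
  assumes k1: "k1 > 0" and k2: "k2 > 0" and L: "L > 0"
    and nd: "(a1 = 0 \<and> a2 = 0) \<or> (Im (of_real k1 * a1) = Im (of_real k2 * a2) \<and> Im (of_real k1 * a1) \<noteq> 0)"
    and r1: "r1 absolutely_integrable_on {-L..0}" and r2: "r2 absolutely_integrable_on {0..L}"
  shows "\<exists>u g1 v g2. AC (-L) 0 u g1 \<and> AC (-L) 0 g1 (\<lambda>x. a1 * u x + r1 x) \<and>
           AC 0 L v g2 \<and> AC 0 L g2 (\<lambda>x. a2 * v x + r2 x) \<and>
           u (-L) = 0 \<and> v L = 0 \<and> u 0 = v 0 \<and> of_real k1 * g1 0 = of_real k2 * g2 0"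
proof -
  obtain up gp where up: "AC (-L) 0 up gp" "AC (-L) 0 gp (\<lambda>x. a1 * up x + r1 x)" "up (-L) = 0" "gp (-L) = 0"
    using ode_particular[OF r1, of a1] by blast
  obtain vp gq where vp: "AC 0 L vp gq" "AC 0 L gq (\<lambda>x. a2 * vp x + r2 x)" "vp 0 = 0" "gq 0 = 0"
    using ode_particular[OF r2, of a2] by blast
  define D where "D = of_real k2 * Sf a1 L * Cf a2 L + of_real k1 * Cf a1 L * Sf a2 L"
  have D0: "D \<noteq> 0" unfolding D_def by (rule det_nonzero[OF k1 k2 L nd])
  define S1 where "S1 x = Sf a1 (x - (-L))" for x
  define C1 where "C1 x = Cf a1 (x - (-L))" for x
  define S2 where "S2 x = Sf a2 (x - 0)" for x
  define C2 where "C2 x = Cf a2 (x - 0)" for x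
  have dS1: "\<And>t. (S1 has_vector_derivative C1 t) (at t)" unfolding S1_def C1_def by (rule Sf_shift_deriv)
  have dC1: "\<And>t. (C1 has_vector_derivative a1 * S1 t) (at t)" unfolding S1_def C1_def by (rule Cf_shift_deriv)
  have dS2: "\<And>t. (S2 has_vector_derivative C2 t) (at t)" unfolding S2_def C2_def by (rule Sf_shift_deriv)
  have dC2: "\<And>t. (C2 has_vector_derivative a2 * S2 t) (at t)" unfolding S2_def C2_def by (rule Cf_shift_deriv)
  have cS1: "continuous_on UNIV S1" unfolding S1_def by (rule Sf_shift_cont)
  have cC1: "continuous_on UNIV C1" unfolding C1_def by (rule Cf_shift_cont)
  have cS2: "continuous_on UNIV S2" unfolding S2_def by (rule Sf_shift_cont)
  have cC2: "continuous_on UNIV C2" unfolding C2_def by (rule Cf_shift_cont)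
  have caS1: "continuous_on UNIV (\<lambda>t. a1 * S1 t)" by (intro continuous_intros cS1)
  have caS2: "continuous_on UNIV (\<lambda>t. a2 * S2 t)" by (intro continuous_intros cS2)
  define A where "A = - (of_real k2 * vp L + of_real k2 * up 0 * Cf a2 L + of_real k1 * gp 0 * Sf a2 L) / D"
  define B where "B = up 0 + A * Sf a1 L"
  define B' where "B' = of_real k1 * (gp 0 + A * Cf a1 L) / of_real k2"
  define u where "u x = up x + A * S1 x" for x
  define g1 where "g1 x = gp x + A * C1 x" for x
  define v where "v x = vp x + B * C2 x + B' * S2 x" for x
  define g2 where "g2 x = gq x + B * (a2 * S2 x) + B' * C2 x" for x
  have ACu: "AC (-L) 0 u g1"
    unfolding u_def g1_def by (rule AC_add[OF up(1) AC_cmult[OF AC_smooth[OF dS1 cC1]]])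
  have ACg1: "AC (-L) 0 g1 (\<lambda>x. a1 * u x + r1 x)"
  proof -
    have "AC (-L) 0 g1 (\<lambda>x. (a1 * up x + r1 x) + A * (a1 * S1 x))"
      unfolding g1_def by (rule AC_add[OF up(2) AC_cmult[OF AC_smooth[OF dC1 caS1]]])
    then show ?thesis by (rule AC_cong) (simp_all add: u_def algebra_simps)
  qed
  have ACv: "AC 0 L v g2"
  proof -
    have "AC 0 L (\<lambda>x. vp x + B * C2 x + B' * S2 x) (\<lambda>x. gq x + B * (a2 * S2 x) + B' * C2 x)"
      by (rule AC_add[OF AC_add[OF vp(1) AC_cmult[OF AC_smooth[OF dC2 caS2]]] AC_cmult[OF AC_smooth[OF dS2 cC2]]])
    then show ?thesis unfolding v_def g2_def .
  qed
  have ACg2: "AC 0 L g2 (\<lambda>x. a2 * v x + r2 x)"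
  proof -
    have d3: "\<And>t. ((\<lambda>x. a2 * S2 x) has_vector_derivative a2 * C2 t) (at t)"
      by (intro has_vector_derivative_mult_right dS2)
    have caC2: "continuous_on UNIV (\<lambda>t. a2 * C2 t)" by (intro continuous_intros cC2)
    have "AC 0 L (\<lambda>x. gq x + B * (a2 * S2 x) + B' * C2 x)
            (\<lambda>x. (a2 * vp x + r2 x) + B * (a2 * C2 x) + B' * (a2 * S2 x))"
      by (rule AC_add[OF AC_add[OF vp(2) AC_cmult[OF AC_smooth[OF d3 caC2]]] AC_cmult[OF AC_smooth[OF dC2 caS2]]])
    then show ?thesis by (rule AC_cong) (simp_all add: v_def g2_def algebra_simps)
  qed
  have S1L: "S1 0 = Sf a1 L" and C1L: "C1 0 = Cf a1 L" and S1m: "S1 (-L) = 0"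
    by (simp_all add: S1_def C1_def)
  have S20: "S2 0 = 0" and C20: "C2 0 = 1" and S2L: "S2 L = Sf a2 L" and C2L: "C2 L = Cf a2 L"
    by (simp_all add: S2_def C2_def)
  have bc1: "u (-L) = 0" by (simp add: u_def up(3) S1m)
  have bc2: "u 0 = v 0" by (simp add: u_def v_def vp(3) S20 C20 S1L B_def)
  have bc3: "of_real k1 * g1 0 = of_real k2 * g2 0"
    using k2 by (simp add: g1_def g2_def vp(4) S20 C20 C1L B'_def)
  have bc4: "v L = 0"
  proof -
    have "of_real k2 * v L = of_real k2 * vp L + of_real k2 * up 0 * Cf a2 L + of_real k1 * gp 0 * Sf a2 L + A * D"
      using k2 by (simp add: v_def S2L C2L B_def B'_def D_def field_simps)
    also have "\<dots> = 0" using D0 by (simp add: A_def field_simps)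
    finally show ?thesis using k2 by simp
  qed
  show ?thesis using ACu ACg1 ACv ACg2 bc1 bc2 bc3 bc4 by blast
qed


lemma set_integrable_lborel_of_hk:
  fixes f :: "real \<Rightarrow> real"
  assumes "f integrable_on S" "\<And>x. x \<in> S \<Longrightarrow> 0 \<le> f x" "S \<in> sets borel" "f \<in> borel_measurable borel"
  shows "set_integrable lborel S f"
proof -
  have "f absolutely_integrable_on S" by (rule nonnegative_absolutely_integrable_1[OF assms(1,2)])
  moreover have "(\<lambda>x. indicator S x *\<^sub>R f x) \<in> borel_measurable lborel"
    using assms(3,4) by measurable
  ultimately show ?thesis unfolding set_integrable_def using integrable_completion by blast
qed

lemma one_plus_x4_pos[simp]: "0 < 1 + (x::real)^4" by (simp add: add_pos_nonneg)

lemma powr_frac_integrable: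
  fixes p :: real
  assumes p1: "-1 < p" and p3: "p < 3"
  shows "integrable lborel (\<lambda>\<xi>::real. \<bar>\<xi>\<bar> powr p / (1 + \<xi>^4))"
proof -
  define h where "h \<xi> = \<bar>\<xi>\<bar> powr p / (1 + \<xi>^4)" for \<xi> :: real
  have i1: "set_integrable lborel {0..1} (\<lambda>x::real. x powr p)"
    by (rule set_integrable_lborel_of_hk[OF integrable_on_powr_from_0[OF p1]]) auto
  have i2: "set_integrable lborel {1..} (\<lambda>x::real. x powr (p - 4))"
  proof (rule set_integrable_lborel_of_hk)
    show "(\<lambda>x::real. x powr (p - 4)) integrable_on {1..}"
      using has_integral_powr_to_inf[of "p - 4" 1] p3 unfolding integrable_on_def by auto
  qed auto
  have hm: "h \<in> borel_measurable lborel" unfolding h_def by measurable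
  have "integrable lborel (\<lambda>x. indicator {0..} x *\<^sub>R h x)"
  proof (rule Bochner_Integration.integrable_bound)
    show "integrable lborel (\<lambda>x. indicator {0..1} x *\<^sub>R x powr p + indicator {1..} x *\<^sub>R x powr (p - 4))"
      using i1 i2 unfolding set_integrable_def by (rule Bochner_Integration.integrable_add)
    show "(\<lambda>x. indicator {0..} x *\<^sub>R h x) \<in> borel_measurable lborel" using hm by measurable
    show "AE x in lborel. norm (indicator {0..} x *\<^sub>R h x)
        \<le> norm (indicator {0..1} x *\<^sub>R x powr p + indicator {1..} x *\<^sub>R x powr (p - 4))"
    proof (rule AE_I2)
      fix x :: real
      have hn: "0 \<le> h x" unfolding h_def by (simp add: add_pos_nonneg)
      show "norm (indicator {0..} x *\<^sub>R h x)
          \<le> norm (indicator {0..1} x *\<^sub>R x powr p + indicator {1..} x *\<^sub>R x powr (p - 4))"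
      proof (cases "0 \<le> x")
        case False then show ?thesis by (simp add: indicator_def)
      next
        case x0: True
        show ?thesis
        proof (cases "x \<le> 1")
          case True
          have "h x = x powr p / (1 + x^4)" unfolding h_def using x0 by simp
          also have "\<dots> \<le> x powr p / 1" by (intro divide_left_mono) auto
          finally have "h x \<le> x powr p" by simp
          have n1: "norm (indicator {0..} x *\<^sub>R h x) = h x" using x0 hn by simp
          have "x powr p \<le> indicator {0..1} x *\<^sub>R x powr p + indicator {1..} x *\<^sub>R x powr (p - 4)"
            using x0 True by (simp add: indicator_def)
          also have "\<dots> \<le> norm (indicator {0..1} x *\<^sub>R x powr p + indicator {1..} x *\<^sub>R x powr (p - 4))"
            by (simp only: real_norm_def abs_ge_self)
          finally show ?thesis using n1 \<open>h x \<le> x powr p\<close> by linarith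
        next
          case False
          then have x1: "1 < x" by simp
          have "h x = x powr p / (1 + x^4)" unfolding h_def using x0 by simp
          also have "\<dots> \<le> x powr p / x^4" using x1 by (intro divide_left_mono) auto
          also have "\<dots> = x powr (p - 4)"
          proof -
            have "x powr 4 = x^4" using x1 by (simp add: powr_numeral)
            then show ?thesis using x1 by (simp add: powr_diff)
          qed
          finally show ?thesis using x0 x1 hn by (simp add: indicator_def)
        qed
      qed
    qed
  qed
  then have hb: "has_bochner_integral lborel (\<lambda>x. indicator {0..} x *\<^sub>R h x) (integral\<^sup>L lborel (\<lambda>x. indicator {0..} x *\<^sub>R h x))"
    by (rule has_bochner_integral_integrable)
  have "has_bochner_integral lborel h (2 *\<^sub>R integral\<^sup>L lborel (\<lambda>x. indicator {0..} x *\<^sub>R h x))"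
    by (rule has_bochner_integral_even_function[OF hb]) (simp add: h_def)
  then have "integrable lborel h" by (rule integrable.intros)
  then show ?thesis unfolding h_def .
qed


definition dd :: "real \<Rightarrow> real \<Rightarrow> real \<Rightarrow> complex" where
  "dd lam eta \<xi> = \<i> * of_real lam + of_real (\<xi>^2 + eta)"

definition gg :: "real \<Rightarrow> real \<Rightarrow> real \<Rightarrow> real \<Rightarrow> complex" where
  "gg al lam eta \<xi> = of_real (mu al \<xi>) / dd lam eta \<xi>"

definition mm :: "real \<Rightarrow> real \<Rightarrow> real \<Rightarrow> complex" where
  "mm al lam eta = (LINT \<xi>|lborel. of_real (mu al \<xi>) * of_real (mu al \<xi>) / dd lam eta \<xi>)"

lemma dd_measurable[measurable]: "dd lam eta \<in> borel_measurable borel"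
  unfolding dd_def by measurable

lemma mu_measurable[measurable]: "mu al \<in> borel_measurable borel"
  unfolding mu_def by measurable

lemma gg_measurable[measurable]: "gg al lam eta \<in> borel_measurable borel"
  unfolding gg_def by measurable

lemma cmod_dd_sq: "(cmod (dd lam eta \<xi>))^2 = lam^2 + (\<xi>^2 + eta)^2"
  unfolding dd_def by (simp add: cmod_power2)

lemma mu_sq: "(mu al \<xi>)^2 = \<bar>\<xi>\<bar> powr (2 * al - 1)"
proof -
  have "(mu al \<xi>)^2 = \<bar>\<xi>\<bar> powr ((2 * al - 1) / 2) * \<bar>\<xi>\<bar> powr ((2 * al - 1) / 2)"
    unfolding mu_def by (simp add: power2_eq_square)
  also have "\<dots> = \<bar>\<xi>\<bar> powr (2 * al - 1)" by (simp add: powr_add[symmetric])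
  finally show ?thesis .
qed

lemma mu_nonneg: "0 \<le> mu al \<xi>" unfolding mu_def by simp

lemma powr_shift2: "\<xi>^2 * \<bar>\<xi>\<bar> powr (q::real) = \<bar>\<xi>\<bar> powr (q + 2)"
proof (cases "\<xi> = 0")
  case True then show ?thesis by simp
next
  case False
  have "\<bar>\<xi>\<bar> powr 2 = \<xi>^2" using False by (simp add: powr_numeral)
  then show ?thesis by (simp add: powr_add)
qed

context
  fixes al lam eta :: real
  assumes al0: "0 < al" and al1: "al < 1" and eta0: "0 \<le> eta" and nd: "lam \<noteq> 0 \<or> 0 < eta"
begin

definition "c0 = min (lam^2 + eta^2) 1"

lemma c0_pos: "0 < c0"
proof -
  have "0 < lam^2 + eta^2" using nd by (auto simp: add_pos_nonneg add_nonneg_pos)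
  then show ?thesis unfolding c0_def by simp
qed

lemma dd_lower: "c0 * (1 + \<xi>^4) \<le> (cmod (dd lam eta \<xi>))^2"
proof -
  have A: "(\<xi>^2 + eta)^2 = \<xi>^4 + 2 * \<xi>^2 * eta + eta^2" by (simp add: power2_eq_square power4_eq_xxxx algebra_simps)
  have B: "0 \<le> 2 * \<xi>^2 * eta" using eta0 by simp
  have C: "\<xi>^4 + (lam^2 + eta^2) \<le> (cmod (dd lam eta \<xi>))^2" unfolding cmod_dd_sq using A B by linarith
  have c1: "c0 \<le> lam^2 + eta^2" and c2: "c0 \<le> 1" unfolding c0_def by auto
  have "c0 * \<xi>^4 \<le> 1 * \<xi>^4" by (rule mult_right_mono[OF c2]) simp
  then have "c0 * (1 + \<xi>^4) \<le> (lam^2 + eta^2) + \<xi>^4" using c1 by (simp add: distrib_left)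
  then show ?thesis using C by linarith
qed

lemma dd_sq_pos: "0 < (cmod (dd lam eta \<xi>))^2"
proof -
  have "0 < c0 * (1 + \<xi>^4)" using c0_pos by simp
  then show ?thesis using dd_lower[of \<xi>] by linarith
qed

lemma dd_nonzero: "dd lam eta \<xi> \<noteq> 0"
  using dd_sq_pos[of \<xi>] by auto

lemma dd_upper: "cmod (dd lam eta \<xi>) \<le> \<bar>lam\<bar> + eta + \<xi>^2"
proof -
  have T: "cmod (dd lam eta \<xi>) \<le> cmod (\<i> * complex_of_real lam) + cmod (complex_of_real (\<xi>^2 + eta))"
    unfolding dd_def by (rule norm_triangle_ineq)
  have n1: "cmod (\<i> * complex_of_real lam) = \<bar>lam\<bar>" by (simp add: norm_mult)
  have n2: "cmod (complex_of_real (\<xi>^2 + eta)) = \<xi>^2 + eta"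
    unfolding norm_of_real using eta0 by simp
  show ?thesis using T n1 n2 by linarith
qed

definition "QQ \<xi> = (\<bar>\<xi>\<bar> powr (2 * al - 1) + \<bar>\<xi>\<bar> powr (2 * al + 1)) / (1 + \<xi>^4)"

lemma QQ_integrable: "integrable lborel QQ"
proof -
  have "integrable lborel (\<lambda>\<xi>. \<bar>\<xi>\<bar> powr (2 * al - 1) / (1 + \<xi>^4) + \<bar>\<xi>\<bar> powr (2 * al + 1) / (1 + \<xi>^4))"
    by (intro Bochner_Integration.integrable_add powr_frac_integrable) (use al0 al1 in auto)
  then show ?thesis unfolding QQ_def by (simp add: add_divide_distrib)
qed

lemma QQ_nonneg: "0 \<le> QQ \<xi>" unfolding QQ_def by simp

lemma QQ_measurable[measurable]: "QQ \<in> borel_measurable borel" unfolding QQ_def by measurable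

lemma bound_by_QQ:
  assumes "0 \<le> X" "X * (cmod (dd lam eta \<xi>))^2 \<le> K * (\<bar>\<xi>\<bar> powr (2 * al - 1) + \<bar>\<xi>\<bar> powr (2 * al + 1))" "0 \<le> K"
  shows "X \<le> (K / c0) * QQ \<xi>"
proof -
  have "X * (c0 * (1 + \<xi>^4)) \<le> X * (cmod (dd lam eta \<xi>))^2"
    by (rule mult_left_mono[OF dd_lower assms(1)])
  also have "\<dots> \<le> K * (\<bar>\<xi>\<bar> powr (2 * al - 1) + \<bar>\<xi>\<bar> powr (2 * al + 1))" by (rule assms(2))
  finally have "X * (c0 * (1 + \<xi>^4)) \<le> K * (\<bar>\<xi>\<bar> powr (2 * al - 1) + \<bar>\<xi>\<bar> powr (2 * al + 1))" .
  moreover have Z: "0 < c0 * (1 + \<xi>^4)" using c0_pos by simp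
  ultimately have "X \<le> K * (\<bar>\<xi>\<bar> powr (2 * al - 1) + \<bar>\<xi>\<bar> powr (2 * al + 1)) / (c0 * (1 + \<xi>^4))"
    using pos_le_divide_eq[OF Z] by simp
  also have "\<dots> = (K / c0) * QQ \<xi>" unfolding QQ_def by simp
  finally show ?thesis .
qed

lemma gg_sq_integrable: "integrable lborel (\<lambda>\<xi>. (cmod (gg al lam eta \<xi>))^2)"
proof (rule Bochner_Integration.integrable_bound)
  show "integrable lborel (\<lambda>\<xi>. (1 / c0) * QQ \<xi>)" using QQ_integrable by simp
  show "(\<lambda>\<xi>. (cmod (gg al lam eta \<xi>))^2) \<in> borel_measurable lborel" by measurable
  show "AE \<xi> in lborel. norm ((cmod (gg al lam eta \<xi>))^2) \<le> norm ((1 / c0) * QQ \<xi>)"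
  proof (rule AE_I2)
    fix \<xi>
    have "(cmod (gg al lam eta \<xi>))^2 * (cmod (dd lam eta \<xi>))^2 = (mu al \<xi>)^2"
      using dd_nonzero[of \<xi>] unfolding gg_def by (simp add: norm_divide power_divide mu_nonneg)
    also have "\<dots> \<le> 1 * (\<bar>\<xi>\<bar> powr (2 * al - 1) + \<bar>\<xi>\<bar> powr (2 * al + 1))" by (simp add: mu_sq)
    finally have "(cmod (gg al lam eta \<xi>))^2 \<le> (1 / c0) * QQ \<xi>" by (intro bound_by_QQ) auto
    then show "norm ((cmod (gg al lam eta \<xi>))^2) \<le> norm ((1 / c0) * QQ \<xi>)"
      using QQ_nonneg[of \<xi>] c0_pos by simp
  qed
qed

lemma xi_gg_sq_integrable: "integrable lborel (\<lambda>\<xi>. (cmod (of_real \<bar>\<xi>\<bar> * gg al lam eta \<xi>))^2)"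
proof (rule Bochner_Integration.integrable_bound)
  show "integrable lborel (\<lambda>\<xi>. (1 / c0) * QQ \<xi>)" using QQ_integrable by simp
  show "(\<lambda>\<xi>. (cmod (of_real \<bar>\<xi>\<bar> * gg al lam eta \<xi>))^2) \<in> borel_measurable lborel" by measurable
  show "AE \<xi> in lborel. norm ((cmod (of_real \<bar>\<xi>\<bar> * gg al lam eta \<xi>))^2) \<le> norm ((1 / c0) * QQ \<xi>)"
  proof (rule AE_I2)
    fix \<xi>
    have "(cmod (of_real \<bar>\<xi>\<bar> * gg al lam eta \<xi>))^2 * (cmod (dd lam eta \<xi>))^2 = \<xi>^2 * (mu al \<xi>)^2"
      using dd_nonzero[of \<xi>] unfolding gg_def by (simp add: norm_divide norm_mult power_divide power_mult_distrib mu_nonneg)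
    also have "\<dots> = \<bar>\<xi>\<bar> powr (2 * al + 1)"
    proof -
      have ex: "2 * al - 1 + 2 = 2 * al + 1" by simp
      show ?thesis using powr_shift2[of \<xi> "2 * al - 1"] unfolding ex by (simp only: mu_sq)
    qed
    also have "\<dots> \<le> 1 * (\<bar>\<xi>\<bar> powr (2 * al - 1) + \<bar>\<xi>\<bar> powr (2 * al + 1))" by simp
    finally have "(cmod (of_real \<bar>\<xi>\<bar> * gg al lam eta \<xi>))^2 \<le> (1 / c0) * QQ \<xi>" by (intro bound_by_QQ) auto
    then show "norm ((cmod (of_real \<bar>\<xi>\<bar> * gg al lam eta \<xi>))^2) \<le> norm ((1 / c0) * QQ \<xi>)"
      using QQ_nonneg[of \<xi>] c0_pos by simp
  qed
qed

lemma mm_integrable: "integrable lborel (\<lambda>\<xi>. of_real (mu al \<xi>) * of_real (mu al \<xi>) / dd lam eta \<xi>)"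
proof (rule Bochner_Integration.integrable_bound)
  define K where "K = \<bar>lam\<bar> + eta + 1"
  have K0: "0 \<le> K" unfolding K_def using eta0 by simp
  show "integrable lborel (\<lambda>\<xi>. (K / c0) * QQ \<xi>)" using QQ_integrable by simp
  show "(\<lambda>\<xi>. of_real (mu al \<xi>) * of_real (mu al \<xi>) / dd lam eta \<xi>) \<in> borel_measurable lborel" by measurable
  show "AE \<xi> in lborel. norm (of_real (mu al \<xi>) * of_real (mu al \<xi>) / dd lam eta \<xi>) \<le> norm ((K / c0) * QQ \<xi>)"
  proof (rule AE_I2)
    fix \<xi>
    define X where "X = norm (complex_of_real (mu al \<xi>) * complex_of_real (mu al \<xi>) / dd lam eta \<xi>)"
    have X0: "0 \<le> X" unfolding X_def by simp
    have "X * (cmod (dd lam eta \<xi>))^2 = (mu al \<xi>)^2 * cmod (dd lam eta \<xi>)"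
      using dd_nonzero[of \<xi>] unfolding X_def by (simp add: norm_divide norm_mult power2_eq_square mu_nonneg)
    also have "\<dots> \<le> (mu al \<xi>)^2 * (\<bar>lam\<bar> + eta + \<xi>^2)" by (intro mult_left_mono dd_upper) simp
    also have "\<dots> = (\<bar>lam\<bar> + eta) * (mu al \<xi>)^2 + \<xi>^2 * (mu al \<xi>)^2"
      by (simp add: algebra_simps)
    also have "\<dots> = (\<bar>lam\<bar> + eta) * \<bar>\<xi>\<bar> powr (2 * al - 1) + \<bar>\<xi>\<bar> powr (2 * al + 1)"
    proof -
      have ex: "2 * al - 1 + 2 = 2 * al + 1" by simp
      have e: "\<xi>^2 * \<bar>\<xi>\<bar> powr (2 * al - 1) = \<bar>\<xi>\<bar> powr (2 * al + 1)"
        using powr_shift2[of \<xi> "2 * al - 1"] unfolding ex .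
      show ?thesis by (simp only: mu_sq e)
    qed
    also have "\<dots> \<le> K * (\<bar>\<xi>\<bar> powr (2 * al - 1) + \<bar>\<xi>\<bar> powr (2 * al + 1))"
      unfolding K_def using eta0 by (simp add: algebra_simps add_nonneg_nonneg)
    finally have "X \<le> (K / c0) * QQ \<xi>" by (rule bound_by_QQ[OF X0 _ K0])
    then show "norm (of_real (mu al \<xi>) * of_real (mu al \<xi>) / dd lam eta \<xi>) \<le> norm ((K / c0) * QQ \<xi>)"
      using QQ_nonneg[of \<xi>] c0_pos K0 unfolding X_def by simp
  qed
qed

lemma t_le_1_plus_sq: "(t::real) \<le> 1 + t^2"
proof (cases "t \<le> 1")
  case True then show ?thesis by (smt (verit) zero_le_power2)
next
  case False
  then have "t \<le> t * t" by (simp add: mult_le_cancel_left1)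
  then show ?thesis by (simp add: power2_eq_square)
qed

lemma inv_dd_bounded: "cmod (1 / dd lam eta \<xi>) \<le> 1 / sqrt c0"
proof -
  have "c0 * 1 \<le> c0 * (1 + \<xi>^4)" using c0_pos by (intro mult_left_mono) auto
  then have "c0 \<le> (cmod (dd lam eta \<xi>))^2" using dd_lower[of \<xi>] by linarith
  then have "sqrt c0 \<le> sqrt ((cmod (dd lam eta \<xi>))^2)" by (rule real_sqrt_le_mono)
  then have s: "sqrt c0 \<le> cmod (dd lam eta \<xi>)" by simp
  have sp: "0 < sqrt c0" using c0_pos by simp
  have "1 / cmod (dd lam eta \<xi>) \<le> 1 / sqrt c0" by (rule divide_left_mono[OF s]) (use sp dd_nonzero[of \<xi>] in \<open>auto simp: zero_less_mult_iff\<close>)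
  then show ?thesis by (simp add: norm_divide)
qed

lemma xi_dd_bounded: "cmod (of_real \<bar>\<xi>\<bar> / dd lam eta \<xi>) \<le> 1 / sqrt c0"
proof -
  have "\<xi>^4 = (\<xi>^2)^2" by simp
  then have "\<xi>^2 \<le> 1 + \<xi>^4" using t_le_1_plus_sq[of "\<xi>^2"] by simp
  then have "c0 * \<xi>^2 \<le> c0 * (1 + \<xi>^4)" using c0_pos by (intro mult_left_mono) auto
  then have "c0 * \<xi>^2 \<le> (cmod (dd lam eta \<xi>))^2" using dd_lower[of \<xi>] by linarith
  then have "sqrt (c0 * \<xi>^2) \<le> sqrt ((cmod (dd lam eta \<xi>))^2)" by (rule real_sqrt_le_mono)
  then have s: "sqrt c0 * \<bar>\<xi>\<bar> \<le> cmod (dd lam eta \<xi>)" by (simp add: real_sqrt_mult)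
  have sp: "0 < sqrt c0" using c0_pos by simp
  have dp: "0 < cmod (dd lam eta \<xi>)" using dd_nonzero[of \<xi>] by simp
  have "\<bar>\<xi>\<bar> \<le> cmod (dd lam eta \<xi>) / sqrt c0" using s sp by (simp add: field_simps)
  then have "\<bar>\<xi>\<bar> / cmod (dd lam eta \<xi>) \<le> 1 / sqrt c0" using dp sp by (simp add: field_simps)
  then show ?thesis by (simp add: norm_divide)
qed

end


definition B2 :: "real set \<Rightarrow> (real \<Rightarrow> real \<Rightarrow> complex) \<Rightarrow> bool" where
  "B2 S h \<longleftrightarrow> S \<in> sets borel \<and> (\<lambda>p. h (fst p) (snd p)) \<in> borel_measurable (lborel \<Otimes>\<^sub>M lborel) \<and>
     integrable (lborel \<Otimes>\<^sub>M lborel) (\<lambda>p. indicator S (fst p) * (cmod (h (fst p) (snd p)))^2)"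

lemma Icc_times_sets: "{a..b::real} \<times> (UNIV::real set) \<in> sets borel"
  by (intro borel_closed closed_Times) auto

lemma ind_times: "indicator (S \<times> UNIV) p = (indicator S (fst p) :: real)"
  by (cases p) (simp add: indicator_def)

lemma borel_version2:
  fixes f :: "'a::euclidean_space \<Rightarrow> complex"
  assumes Fm: "f \<in> borel_measurable lebesgue"
  shows "\<exists>g. g \<in> borel_measurable lborel \<and> (AE x in lborel. f x = g x)"
proof -
  have "(\<lambda>x. Re (f x)) \<in> borel_measurable (completion lborel)" using Fm by measurable
  from completion_ex_borel_measurable_real[OF this]
  obtain g1 where g1: "g1 \<in> borel_measurable lborel" "AE x in lborel. Re (f x) = g1 x" by blast
  have "(\<lambda>x. Im (f x)) \<in> borel_measurable (completion lborel)" using Fm by measurable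
  from completion_ex_borel_measurable_real[OF this]
  obtain g2 where g2: "g2 \<in> borel_measurable lborel" "AE x in lborel. Im (f x) = g2 x" by blast
  define g where "g x = Complex (g1 x) (g2 x)" for x
  have gm: "g \<in> borel_measurable lborel"
    unfolding g_def using g1(1) g2(1) by (simp add: borel_measurable_complex_iff)
  have "AE x in lborel. f x = g x"
    using g1(2) g2(2) by eventually_elim (simp add: g_def complex_eq_iff)
  with gm show ?thesis by blast
qed

lemma B2_L2R:
  assumes S: "S = {a..b}" and h: "B2 S h"
  shows "L2R S h"
proof -
  have Sb: "S \<times> (UNIV::real set) \<in> sets borel" unfolding S by (rule Icc_times_sets)
  have Sl: "S \<times> (UNIV::real set) \<in> sets lebesgue" using Sb by simp
  have hm: "(\<lambda>p. h (fst p) (snd p)) \<in> borel_measurable lborel"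
    using h unfolding B2_def lborel_prod by simp
  then have hm2: "(\<lambda>p. h (fst p) (snd p)) \<in> borel_measurable lebesgue" by (rule measurable_completion)
  have "integrable lborel (\<lambda>p. indicator S (fst p) * (cmod (h (fst p) (snd p)))^2)"
    using h unfolding B2_def lborel_prod by simp
  then have "integrable lborel (\<lambda>p. indicator (S \<times> UNIV) p *\<^sub>R (cmod (h (fst p) (snd p)))^2)"
    by (simp add: ind_times)
  then have "integrable lebesgue (\<lambda>p. indicator (S \<times> UNIV) p *\<^sub>R (cmod (h (fst p) (snd p)))^2)"
    by (subst integrable_completion) (use hm Sb in measurable)
  then have "integrable (lebesgue_on (S \<times> UNIV)) (\<lambda>p. (cmod (h (fst p) (snd p)))^2)"
    using Sl by (subst integrable_restrict_space) auto
  moreover have "(\<lambda>p. h (fst p) (snd p)) \<in> borel_measurable (lebesgue_on (S \<times> UNIV))"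
    by (rule measurable_restrict_space1[OF hm2])
  ultimately show ?thesis unfolding L2R_def by blast
qed

lemma L2R_to_B2:
  fixes f :: "real \<Rightarrow> real \<Rightarrow> complex"
  assumes S: "S = {a..b}" and f: "L2R S f"
  shows "\<exists>f'. B2 S f' \<and> (AE p in lebesgue_on (S \<times> UNIV). f (fst p) (snd p) = f' (fst p) (snd p))"
proof -
  have Sb: "S \<times> (UNIV::real set) \<in> sets borel" unfolding S by (rule Icc_times_sets)
  have Sl: "S \<times> (UNIV::real set) \<in> sets lebesgue" using Sb by simp
  define F where "F p = indicator (S \<times> UNIV) p *\<^sub>R f (fst p) (snd p)" for p
  have Fm: "F \<in> borel_measurable lebesgue"
    using f Sl unfolding L2R_def F_def by (subst (asm) borel_measurable_restrict_space_iff) auto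
  obtain G where Gm: "G \<in> borel_measurable lborel" and FG: "AE p in lborel. F p = G p"
    using borel_version2[OF Fm] by blast
  have SB[measurable]: "S \<in> sets borel" unfolding S by simp
  note Gm[measurable]
  define f' where "f' x \<xi> = G (x, \<xi>)" for x \<xi>
  have Gm': "(\<lambda>p. f' (fst p) (snd p)) \<in> borel_measurable lborel" unfolding f'_def using Gm by simp
  have intF: "integrable lebesgue (\<lambda>p. indicator (S \<times> UNIV) p *\<^sub>R (cmod (f (fst p) (snd p)))^2)"
    using f Sl unfolding L2R_def by (subst (asm) integrable_restrict_space) auto
  have eqF: "indicator (S \<times> UNIV) p *\<^sub>R (cmod (f (fst p) (snd p)))^2 = (cmod (F p))^2" for p
    by (simp add: F_def indicator_def)
  have FGl: "AE p in lebesgue. F p = G p" using FG by (rule AE_completion)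
  have mIG: "(\<lambda>p. indicator S (fst p) * (cmod (G p))^2) \<in> borel_measurable lborel"
  proof -
    have m1: "(indicator (S \<times> (UNIV::real set)) :: real \<times> real \<Rightarrow> real) \<in> borel_measurable lborel"
      using Sb by (intro borel_measurable_indicator) simp
    have m2: "(\<lambda>p. (cmod (G p))^2) \<in> borel_measurable lborel" by measurable
    show ?thesis using borel_measurable_times[OF m1 m2] by (simp add: ind_times)
  qed
  have "integrable lebesgue (\<lambda>p. indicator S (fst p) * (cmod (G p))^2)"
  proof (rule integrable_cong_AE_imp[OF intF])
    show "(\<lambda>p. indicator S (fst p) * (cmod (G p))^2) \<in> borel_measurable lebesgue"
      by (rule measurable_completion[OF mIG])
    show "AE p in lebesgue. indicator (S \<times> UNIV) p *\<^sub>R (cmod (f (fst p) (snd p)))^2 = indicator S (fst p) * (cmod (G p))^2"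
      using FGl
    proof eventually_elim
      case (elim p)
      then show ?case unfolding eqF[of p] by (cases p) (auto simp: F_def indicator_def)
    qed
  qed
  then have "integrable lborel (\<lambda>p. indicator S (fst p) * (cmod (G p))^2)"
    by (subst (asm) integrable_completion[OF mIG])
  then have "B2 S f'" unfolding B2_def lborel_prod f'_def using Gm SB by simp
  moreover have "AE p in lebesgue_on (S \<times> UNIV). f (fst p) (snd p) = f' (fst p) (snd p)"
  proof (subst AE_restrict_space_iff)
    show "S \<times> (UNIV::real set) \<inter> space lebesgue \<in> sets lebesgue" using Sl by simp
    show "AE p in lebesgue. p \<in> S \<times> UNIV \<longrightarrow> f (fst p) (snd p) = f' (fst p) (snd p)"
      using FGl by eventually_elim (auto simp: F_def f'_def)
  qed
  ultimately show ?thesis by blast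
qed


lemma sq_sum_le: "(cmod (a + b))^2 \<le> 2 * (cmod a)^2 + 2 * (cmod b)^2"
proof -
  have "cmod (a + b) \<le> cmod a + cmod b" by (rule norm_triangle_ineq)
  then have "(cmod (a + b))^2 \<le> (cmod a + cmod b)^2" by (rule power_mono) simp
  also have "\<dots> \<le> 2 * (cmod a)^2 + 2 * (cmod b)^2"
  proof -
    have "0 \<le> (cmod a - cmod b)^2" by simp
    then show ?thesis by (simp add: power2_eq_square algebra_simps)
  qed
  finally show ?thesis .
qed

lemma B2_sets: "B2 S h \<Longrightarrow> S \<in> sets borel"
  unfolding B2_def by blast

lemma B2_meas: "B2 S h \<Longrightarrow> (\<lambda>p. h (fst p) (snd p)) \<in> borel_measurable (lborel \<Otimes>\<^sub>M lborel)"
  unfolding B2_def by blast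

lemma B2_int: "B2 S h \<Longrightarrow> integrable (lborel \<Otimes>\<^sub>M lborel) (\<lambda>p. indicator S (fst p) * (cmod (h (fst p) (snd p)))^2)"
  unfolding B2_def by blast

lemma B2_add:
  assumes f: "B2 S f" and g: "B2 S g"
  shows "B2 S (\<lambda>x \<xi>. f x \<xi> + g x \<xi>)"
  unfolding B2_def
proof (intro conjI)
  note [measurable] = B2_meas[OF f] B2_meas[OF g] B2_sets[OF f]
  show "S \<in> sets borel" by (rule B2_sets[OF f])
  show "(\<lambda>p. f (fst p) (snd p) + g (fst p) (snd p)) \<in> borel_measurable (lborel \<Otimes>\<^sub>M lborel)" by measurable
  show "integrable (lborel \<Otimes>\<^sub>M lborel) (\<lambda>p. indicator S (fst p) * (cmod (f (fst p) (snd p) + g (fst p) (snd p)))^2)"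
  proof (rule Bochner_Integration.integrable_bound)
    show "integrable (lborel \<Otimes>\<^sub>M lborel) (\<lambda>p. 2 * (indicator S (fst p) * (cmod (f (fst p) (snd p)))^2) + 2 * (indicator S (fst p) * (cmod (g (fst p) (snd p)))^2))"
      using B2_int[OF f] B2_int[OF g] by (intro Bochner_Integration.integrable_add integrable_mult_right)
    show "(\<lambda>p. indicator S (fst p) * (cmod (f (fst p) (snd p) + g (fst p) (snd p)))^2) \<in> borel_measurable (lborel \<Otimes>\<^sub>M lborel)"
      by measurable
    show "AE p in lborel \<Otimes>\<^sub>M lborel. norm (indicator S (fst p) * (cmod (f (fst p) (snd p) + g (fst p) (snd p)))^2)
       \<le> norm (2 * (indicator S (fst p) * (cmod (f (fst p) (snd p)))^2) + 2 * (indicator S (fst p) * (cmod (g (fst p) (snd p)))^2))"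
    proof (rule AE_I2)
      fix p :: "real \<times> real"
      show "norm (indicator S (fst p) * (cmod (f (fst p) (snd p) + g (fst p) (snd p)))^2)
       \<le> norm (2 * (indicator S (fst p) * (cmod (f (fst p) (snd p)))^2) + 2 * (indicator S (fst p) * (cmod (g (fst p) (snd p)))^2))"
        using sq_sum_le[of "f (fst p) (snd p)" "g (fst p) (snd p)"] by (simp add: indicator_def)
    qed
  qed
qed

lemma B2_cmult:
  assumes f: "B2 S f"
  shows "B2 S (\<lambda>x \<xi>. c * f x \<xi>)"
  unfolding B2_def
proof (intro conjI)
  note [measurable] = B2_meas[OF f] B2_sets[OF f]
  show "S \<in> sets borel" by (rule B2_sets[OF f])
  show "(\<lambda>p. c * f (fst p) (snd p)) \<in> borel_measurable (lborel \<Otimes>\<^sub>M lborel)" by measurable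
  have "integrable (lborel \<Otimes>\<^sub>M lborel) (\<lambda>p. (cmod c)^2 * (indicator S (fst p) * (cmod (f (fst p) (snd p)))^2))"
    using B2_int[OF f] by (rule integrable_mult_right)
  then show "integrable (lborel \<Otimes>\<^sub>M lborel) (\<lambda>p. indicator S (fst p) * (cmod (c * f (fst p) (snd p)))^2)"
    by (simp add: norm_mult power_mult_distrib algebra_simps)
qed

lemma B2_mult_bdd:
  assumes f: "B2 S f" and km: "k \<in> borel_measurable borel" and kb: "\<And>\<xi>. cmod (k \<xi>) \<le> K"
  shows "B2 S (\<lambda>x \<xi>. f x \<xi> * k \<xi>)"
  unfolding B2_def
proof (intro conjI)
  note [measurable] = B2_meas[OF f] B2_sets[OF f] km
  show "S \<in> sets borel" by (rule B2_sets[OF f])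
  show "(\<lambda>p. f (fst p) (snd p) * k (snd p)) \<in> borel_measurable (lborel \<Otimes>\<^sub>M lborel)" by measurable
  show "integrable (lborel \<Otimes>\<^sub>M lborel) (\<lambda>p. indicator S (fst p) * (cmod (f (fst p) (snd p) * k (snd p)))^2)"
  proof (rule Bochner_Integration.integrable_bound)
    show "integrable (lborel \<Otimes>\<^sub>M lborel) (\<lambda>p. K^2 * (indicator S (fst p) * (cmod (f (fst p) (snd p)))^2))"
      using B2_int[OF f] by (rule integrable_mult_right)
    show "(\<lambda>p. indicator S (fst p) * (cmod (f (fst p) (snd p) * k (snd p)))^2) \<in> borel_measurable (lborel \<Otimes>\<^sub>M lborel)"
      by measurable
    show "AE p in lborel \<Otimes>\<^sub>M lborel. norm (indicator S (fst p) * (cmod (f (fst p) (snd p) * k (snd p)))^2)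
       \<le> norm (K^2 * (indicator S (fst p) * (cmod (f (fst p) (snd p)))^2))"
    proof (rule AE_I2)
      fix p :: "real \<times> real"
      have "(cmod (k (snd p)))^2 \<le> K^2" by (rule power_mono[OF kb]) simp
      then have "(cmod (f (fst p) (snd p)))^2 * (cmod (k (snd p)))^2 \<le> (cmod (f (fst p) (snd p)))^2 * K^2"
        by (rule mult_left_mono) simp
      then show "norm (indicator S (fst p) * (cmod (f (fst p) (snd p) * k (snd p)))^2)
       \<le> norm (K^2 * (indicator S (fst p) * (cmod (f (fst p) (snd p)))^2))"
        by (simp add: indicator_def norm_mult power_mult_distrib mult.commute)
    qed
  qed
qed

lemma B2_tensor:
  assumes S: "S \<in> sets borel" "emeasure lborel S < \<infinity>"
    and Um: "U \<in> borel_measurable borel" and Ub: "\<And>x. x \<in> S \<Longrightarrow> cmod (U x) \<le> K"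
    and gm: "g \<in> borel_measurable borel" and gi: "integrable lborel (\<lambda>\<xi>. (cmod (g \<xi>))^2)"
  shows "B2 S (\<lambda>x \<xi>. U x * g \<xi>)"
  unfolding B2_def
proof (intro conjI)
  note [measurable] = S(1) Um gm
  show "S \<in> sets borel" by (rule S(1))
  show "(\<lambda>p. U (fst p) * g (snd p)) \<in> borel_measurable (lborel \<Otimes>\<^sub>M lborel)" by measurable
  show "integrable (lborel \<Otimes>\<^sub>M lborel) (\<lambda>p. indicator S (fst p) * (cmod (U (fst p) * g (snd p)))^2)"
  proof (rule Bochner_Integration.integrable_bound)
    have i1: "integrable lborel (\<lambda>x. K^2 * indicator S x :: real)"
      using S by (intro integrable_mult_right integrable_real_indicator) auto
    show "integrable (lborel \<Otimes>\<^sub>M lborel) (\<lambda>p. (K^2 * indicator S (fst p)) * (cmod (g (snd p)))^2)"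
      by (rule integrable_prod_lborel[OF i1 gi])
    show "(\<lambda>p. indicator S (fst p) * (cmod (U (fst p) * g (snd p)))^2) \<in> borel_measurable (lborel \<Otimes>\<^sub>M lborel)"
      by measurable
    show "AE p in lborel \<Otimes>\<^sub>M lborel. norm (indicator S (fst p) * (cmod (U (fst p) * g (snd p)))^2)
       \<le> norm ((K^2 * indicator S (fst p)) * (cmod (g (snd p)))^2)"
    proof (rule AE_I2)
      fix p :: "real \<times> real"
      show "norm (indicator S (fst p) * (cmod (U (fst p) * g (snd p)))^2)
       \<le> norm ((K^2 * indicator S (fst p)) * (cmod (g (snd p)))^2)"
      proof (cases "fst p \<in> S")
        case True
        have "(cmod (U (fst p)))^2 \<le> K^2" by (rule power_mono[OF Ub[OF True]]) simp
        then have "(cmod (U (fst p)))^2 * (cmod (g (snd p)))^2 \<le> K^2 * (cmod (g (snd p)))^2"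
          by (rule mult_right_mono) simp
        then show ?thesis using True by (simp add: norm_mult power_mult_distrib)
      qed simp
    qed
  qed
qed


lemma B2_sections:
  assumes h: "B2 S h"
  shows "AE x in lborel. x \<in> S \<longrightarrow> integrable lborel (\<lambda>\<xi>. (cmod (h x \<xi>))^2)"
    and "integrable lborel (\<lambda>x. indicator S x * (LINT \<xi>|lborel. (cmod (h x \<xi>))^2))"
proof -
  from lborel_pair.AE_integrable_fst'[OF B2_int[OF h]]
  have "AE x in lborel. integrable lborel (\<lambda>\<xi>. indicator S x * (cmod (h x \<xi>))^2)" by simp
  then show "AE x in lborel. x \<in> S \<longrightarrow> integrable lborel (\<lambda>\<xi>. (cmod (h x \<xi>))^2)"
    by eventually_elim (simp add: indicator_def)
  from lborel_pair.integrable_fst'[OF B2_int[OF h]]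
  show "integrable lborel (\<lambda>x. indicator S x * (LINT \<xi>|lborel. (cmod (h x \<xi>))^2))" by simp
qed

lemma prod_L2_integrable:
  fixes a b :: "real \<Rightarrow> complex"
  assumes am: "a \<in> borel_measurable lborel" and bm: "b \<in> borel_measurable lborel"
    and ai: "integrable lborel (\<lambda>x. (cmod (a x))^2)" and bi: "integrable lborel (\<lambda>x. (cmod (b x))^2)"
  shows "integrable lborel (\<lambda>x. a x * b x)"
proof (rule Bochner_Integration.integrable_bound)
  show "integrable lborel (\<lambda>x. (cmod (a x))^2 + (cmod (b x))^2)"
    using ai bi by (rule Bochner_Integration.integrable_add)
  show "(\<lambda>x. a x * b x) \<in> borel_measurable lborel" using am bm by measurable
  show "AE x in lborel. norm (a x * b x) \<le> norm ((cmod (a x))^2 + (cmod (b x))^2)"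
  proof (rule AE_I2)
    fix x
    have "0 \<le> (cmod (a x) - cmod (b x))^2" by simp
    then have "cmod (a x) * cmod (b x) \<le> (cmod (a x))^2 + (cmod (b x))^2"
      by (simp add: power2_eq_square algebra_simps) (smt (verit) mult_nonneg_nonneg norm_ge_zero)
    then show "norm (a x * b x) \<le> norm ((cmod (a x))^2 + (cmod (b x))^2)" by (simp add: norm_mult)
  qed
qed

lemma CS_lborel:
  fixes a b :: "real \<Rightarrow> complex"
  assumes am: "a \<in> borel_measurable lborel" and bm: "b \<in> borel_measurable lborel"
    and ai: "integrable lborel (\<lambda>x. (cmod (a x))^2)" and bi: "integrable lborel (\<lambda>x. (cmod (b x))^2)"
  shows "(cmod (LINT x|lborel. a x * b x))^2 \<le> (LINT x|lborel. (cmod (a x))^2) * (LINT x|lborel. (cmod (b x))^2)"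
proof -
  have ab: "integrable lborel (\<lambda>x. a x * b x)" by (rule prod_L2_integrable[OF am bm ai bi])
  have abn: "integrable lborel (\<lambda>x. cmod (a x) * cmod (b x))"
    using integrable_norm[OF ab] by (simp add: norm_mult)
  define X where "X = (LINT x|lborel. cmod (a x) * cmod (b x))"
  define A where "A = (LINT x|lborel. (cmod (a x))^2)"
  define B where "B = (LINT x|lborel. (cmod (b x))^2)"
  have X0: "0 \<le> X" unfolding X_def by (intro integral_nonneg_AE) auto
  have A0: "0 \<le> A" unfolding A_def by (intro integral_nonneg_AE) auto
  have B0: "0 \<le> B" unfolding B_def by (intro integral_nonneg_AE) auto
  have N: "cmod (LINT x|lborel. a x * b x) \<le> X"
    unfolding X_def using integral_norm_bound[of lborel "\<lambda>x. a x * b x"] by (simp add: norm_mult)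
  have eX: "ennreal X = (\<integral>\<^sup>+ x. ennreal (cmod (a x)) * ennreal (cmod (b x)) \<partial>lborel)"
  proof -
    have "(\<integral>\<^sup>+ x. ennreal (cmod (a x) * cmod (b x)) \<partial>lborel) = ennreal X"
      unfolding X_def by (rule nn_integral_eq_integral[OF abn]) auto
    then show ?thesis by (simp add: ennreal_mult)
  qed
  have eA: "ennreal A = (\<integral>\<^sup>+ x. (ennreal (cmod (a x)))^2 \<partial>lborel)"
  proof -
    have "(\<integral>\<^sup>+ x. ennreal ((cmod (a x))^2) \<partial>lborel) = ennreal A"
      unfolding A_def by (rule nn_integral_eq_integral[OF ai]) auto
    then show ?thesis by (simp add: ennreal_power)
  qed
  have eB: "ennreal B = (\<integral>\<^sup>+ x. (ennreal (cmod (b x)))^2 \<partial>lborel)"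
  proof -
    have "(\<integral>\<^sup>+ x. ennreal ((cmod (b x))^2) \<partial>lborel) = ennreal B"
      unfolding B_def by (rule nn_integral_eq_integral[OF bi]) auto
    then show ?thesis by (simp add: ennreal_power)
  qed
  have "(\<integral>\<^sup>+ x. ennreal (cmod (a x)) * ennreal (cmod (b x)) \<partial>lborel)^2
      \<le> (\<integral>\<^sup>+ x. (ennreal (cmod (a x)))^2 \<partial>lborel) * (\<integral>\<^sup>+ x. (ennreal (cmod (b x)))^2 \<partial>lborel)"
    by (rule Cauchy_Schwarz_nn_integral) (use am bm in measurable)
  then have "(ennreal X)^2 \<le> ennreal A * ennreal B" unfolding eX eA eB .
  then have "ennreal (X^2) \<le> ennreal (A * B)" using X0 A0 B0 by (simp add: ennreal_power ennreal_mult)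
  then have "X^2 \<le> A * B" using A0 B0 by (simp add: ennreal_le_iff)
  moreover have "(cmod (LINT x|lborel. a x * b x))^2 \<le> X^2" by (rule power_mono[OF N]) simp
  ultimately show ?thesis unfolding A_def B_def by linarith
qed

lemma B2_F_L2:
  assumes h: "B2 S h" and S: "S = {a..b}" and gm: "g \<in> borel_measurable borel"
    and gi: "integrable lborel (\<lambda>\<xi>. (cmod (g \<xi>))^2)"
  shows "L2 S (\<lambda>x. LINT \<xi>|lborel. h x \<xi> * g \<xi>)"
proof -
  define F where "F x = (LINT \<xi>|lborel. h x \<xi> * g \<xi>)" for x
  note [measurable] = B2_meas[OF h] gm
  have SB[measurable]: "S \<in> sets borel" using S by simp
  have Fm: "F \<in> borel_measurable lborel"
    unfolding F_def by (rule lborel.borel_measurable_lebesgue_integral) measurable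
  define G where "G = (LINT \<xi>|lborel. (cmod (g \<xi>))^2)"
  have bound: "AE x in lborel. norm (indicator S x * (cmod (F x))^2) \<le> norm (G * (indicator S x * (LINT \<xi>|lborel. (cmod (h x \<xi>))^2)))"
    using B2_sections(1)[OF h]
  proof eventually_elim
    case (elim x)
    show ?case
    proof (cases "x \<in> S")
      case True
      then have hi: "integrable lborel (\<lambda>\<xi>. (cmod (h x \<xi>))^2)" using elim by blast
      have hxm: "(\<lambda>\<xi>. h x \<xi>) \<in> borel_measurable lborel"
        using measurable_Pair2[OF B2_meas[OF h], of x] by simp
      have "(cmod (F x))^2 \<le> (LINT \<xi>|lborel. (cmod (h x \<xi>))^2) * G"
        unfolding F_def G_def by (rule CS_lborel[OF hxm _ hi gi]) (use gm in \<open>simp add: measurable_lborel2\<close>)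
      moreover have "0 \<le> (LINT \<xi>|lborel. (cmod (h x \<xi>))^2)" by (intro integral_nonneg_AE) auto
      moreover have "0 \<le> G" unfolding G_def by (intro integral_nonneg_AE) auto
      ultimately show ?thesis using True by (simp add: mult.commute)
    qed simp
  qed
  have "integrable lborel (\<lambda>x. indicator S x * (cmod (F x))^2)"
  proof (rule Bochner_Integration.integrable_bound[OF _ _ bound])
    show "integrable lborel (\<lambda>x. G * (indicator S x * (LINT \<xi>|lborel. (cmod (h x \<xi>))^2)))"
      using B2_sections(2)[OF h] by (rule integrable_mult_right)
    show "(\<lambda>x. indicator S x * (cmod (F x))^2) \<in> borel_measurable lborel" using Fm by measurable
  qed
  then have "integrable lborel (\<lambda>x. indicator S x *\<^sub>R (cmod (F x))^2)" by simp
  then have "integrable lebesgue (\<lambda>x. indicator S x *\<^sub>R (cmod (F x))^2)"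
    by (subst integrable_completion) (use Fm in measurable)
  then have "integrable (lebesgue_on S) (\<lambda>x. (cmod (F x))^2)"
    by (subst integrable_restrict_space) (use SB in auto)
  moreover have "F \<in> borel_measurable (lebesgue_on S)"
    by (rule measurable_restrict_space1[OF measurable_completion[OF Fm]])
  ultimately show ?thesis unfolding L2_def F_def by blast
qed


lemma L2_add:
  fixes f g :: "real \<Rightarrow> complex"
  assumes f: "L2 {a..b} f" and g: "L2 {a..b} g"
  shows "L2 {a..b} (\<lambda>x. f x + g x)"
  unfolding L2_def
proof
  have [measurable]: "f \<in> borel_measurable (lebesgue_on {a..b})" "g \<in> borel_measurable (lebesgue_on {a..b})"
    using f g by (auto simp: L2_def)
  show "(\<lambda>x. f x + g x) \<in> borel_measurable (lebesgue_on {a..b})" by measurable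
  show "integrable (lebesgue_on {a..b}) (\<lambda>x. (cmod (f x + g x))^2)"
  proof (rule Bochner_Integration.integrable_bound)
    show "integrable (lebesgue_on {a..b}) (\<lambda>x. 2 * (cmod (f x))^2 + 2 * (cmod (g x))^2)"
      using f g unfolding L2_def by (intro Bochner_Integration.integrable_add integrable_mult_right) auto
    show "(\<lambda>x. (cmod (f x + g x))^2) \<in> borel_measurable (lebesgue_on {a..b})" by measurable
    show "AE x in lebesgue_on {a..b}. norm ((cmod (f x + g x))^2) \<le> norm (2 * (cmod (f x))^2 + 2 * (cmod (g x))^2)"
      using sq_sum_le by (intro AE_I2) auto
  qed
qed

lemma L2_cmult:
  fixes f :: "real \<Rightarrow> complex"
  assumes f: "L2 {a..b} f"
  shows "L2 {a..b} (\<lambda>x. c * f x)"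
  unfolding L2_def
proof
  have [measurable]: "f \<in> borel_measurable (lebesgue_on {a..b})" using f by (auto simp: L2_def)
  show "(\<lambda>x. c * f x) \<in> borel_measurable (lebesgue_on {a..b})" by measurable
  have "integrable (lebesgue_on {a..b}) (\<lambda>x. (cmod c)^2 * (cmod (f x))^2)"
    using f unfolding L2_def by (intro integrable_mult_right) auto
  then show "integrable (lebesgue_on {a..b}) (\<lambda>x. (cmod (c * f x))^2)"
    by (simp add: norm_mult power_mult_distrib)
qed

lemma L2_diff:
  fixes f g :: "real \<Rightarrow> complex"
  assumes f: "L2 {a..b} f" and g: "L2 {a..b} g"
  shows "L2 {a..b} (\<lambda>x. f x - g x)"
  using L2_add[OF f L2_cmult[OF g, of "-1"]] by simp

lemma L2_cont:
  fixes f :: "real \<Rightarrow> complex"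
  assumes c: "continuous_on {a..b} f"
  shows "L2 {a..b} f"
  unfolding L2_def
proof
  show "f \<in> borel_measurable (lebesgue_on {a..b})"
    by (rule continuous_imp_measurable_on_sets_lebesgue[OF c]) simp
  have "continuous_on {a..b} (\<lambda>x. (cmod (f x))^2)" by (intro continuous_intros c)
  then have "(\<lambda>x. (cmod (f x))^2) absolutely_integrable_on {a..b}"
    by (rule absolutely_integrable_continuous_real)
  then show "integrable (lebesgue_on {a..b}) (\<lambda>x. (cmod (f x))^2)"
    by (simp add: integrable_restrict_space set_integrable_def)
qed

lemma L2R_cong:
  assumes "L2R S h" "\<And>x \<xi>. x \<in> S \<Longrightarrow> h x \<xi> = h' x \<xi>"
  shows "L2R S h'"
proof -
  have sp: "space (lebesgue_on (S \<times> (UNIV::real set))) = S \<times> UNIV" by simp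
  have eq: "\<And>p. p \<in> space (lebesgue_on (S \<times> (UNIV::real set))) \<Longrightarrow> h (fst p) (snd p) = h' (fst p) (snd p)"
    using assms(2) unfolding sp by auto
  have m: "(\<lambda>p. h (fst p) (snd p)) \<in> borel_measurable (lebesgue_on (S \<times> UNIV))"
    and i: "integrable (lebesgue_on (S \<times> UNIV)) (\<lambda>p. (cmod (h (fst p) (snd p)))^2)"
    using assms(1) unfolding L2R_def by auto
  have "((\<lambda>p. h (fst p) (snd p)) \<in> borel_measurable (lebesgue_on (S \<times> (UNIV::real set))))
     = ((\<lambda>p. h' (fst p) (snd p)) \<in> borel_measurable (lebesgue_on (S \<times> (UNIV::real set))))"
    by (rule measurable_cong) (rule eq)
  then have m': "(\<lambda>p. h' (fst p) (snd p)) \<in> borel_measurable (lebesgue_on (S \<times> UNIV))"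
    using m by simp
  have eq2: "\<And>p. p \<in> space (lebesgue_on (S \<times> (UNIV::real set))) \<Longrightarrow> (cmod (h (fst p) (snd p)))^2 = (cmod (h' (fst p) (snd p)))^2"
    using eq by simp
  have "integrable (lebesgue_on (S \<times> (UNIV::real set))) (\<lambda>p. (cmod (h (fst p) (snd p)))^2)
     = integrable (lebesgue_on (S \<times> (UNIV::real set))) (\<lambda>p. (cmod (h' (fst p) (snd p)))^2)"
    by (rule Bochner_Integration.integrable_cong[OF refl]) (rule eq2)
  then have i': "integrable (lebesgue_on (S \<times> UNIV)) (\<lambda>p. (cmod (h' (fst p) (snd p)))^2)"
    using i by simp
  show ?thesis unfolding L2R_def using m' i' by blast
qed

lemma B2_cong:
  assumes "B2 S h" "\<And>x \<xi>. h x \<xi> = h' x \<xi>"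
  shows "B2 S h'"
proof -
  have "h = h'" using assms(2) by (intro ext) auto
  then show ?thesis using assms(1) by simp
qed

context
  fixes al lam eta :: real
  assumes al0: "0 < al" and al1: "al < 1" and eta0: "0 \<le> eta" and nd: "lam \<noteq> 0 \<or> 0 < eta"
begin

lemma mm_Re_pos: "0 < Re (mm al lam eta)"
proof -
  define k where "k \<xi> = complex_of_real (mu al \<xi>) * complex_of_real (mu al \<xi>) / dd lam eta \<xi>" for \<xi>
  have ki: "integrable lborel k" unfolding k_def by (rule mm_integrable[OF al0 al1 eta0 nd])
  have Rek: "Re (k \<xi>) = (mu al \<xi>)^2 * (\<xi>^2 + eta) / (cmod (dd lam eta \<xi>))^2" for \<xi>
  proof -
    have Rd: "Re (dd lam eta \<xi>) = \<xi>^2 + eta" and Id: "Im (dd lam eta \<xi>) = lam" by (simp_all add: dd_def)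
    have "Re (k \<xi>) = (mu al \<xi> * mu al \<xi> * (\<xi>^2 + eta)) / ((\<xi>^2 + eta)^2 + lam^2)"
      unfolding k_def Re_divide Rd Id by simp
    also have "(\<xi>^2 + eta)^2 + lam^2 = (cmod (dd lam eta \<xi>))^2" by (simp add: cmod_dd_sq)
    finally show ?thesis by (simp add: power2_eq_square)
  qed
  have Rek0: "0 \<le> Re (k \<xi>)" for \<xi> unfolding Rek using eta0 by simp
  have Rekp: "0 < Re (k \<xi>)" if "\<xi> \<noteq> 0" for \<xi>
  proof -
    have "0 < (mu al \<xi>)^2" using that unfolding mu_sq by simp
    moreover have "0 < \<xi>^2 + eta" using that eta0 by (simp add: add_pos_nonneg)
    moreover have "0 < (cmod (dd lam eta \<xi>))^2" by (rule dd_sq_pos[OF al0 al1 eta0 nd])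
    ultimately show ?thesis unfolding Rek by simp
  qed
  have Rei: "integrable lborel (\<lambda>\<xi>. Re (k \<xi>))" using ki by (rule integrable_Re)
  have eq: "Re (mm al lam eta) = (LINT \<xi>|lborel. Re (k \<xi>))"
    using ki unfolding mm_def k_def by (subst integral_Re) auto
  have nn: "0 \<le> (LINT \<xi>|lborel. Re (k \<xi>))" by (intro integral_nonneg_AE) (simp add: Rek0)
  have "(LINT \<xi>|lborel. Re (k \<xi>)) \<noteq> 0"
  proof
    assume "(LINT \<xi>|lborel. Re (k \<xi>)) = 0"
    then have "AE \<xi> in lborel. Re (k \<xi>) = 0"
      using integral_nonneg_eq_0_iff_AE[OF Rei] Rek0 by simp
    then have "AE \<xi> in lborel. Re (k \<xi>) = 0 \<and> \<xi> \<noteq> 0"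
      using AE_lborel_singleton[of 0] by (rule AE_conjI)
    then obtain N where N: "{x \<in> space lborel. \<not> (Re (k x) = 0 \<and> x \<noteq> 0)} \<subseteq> N" "emeasure lborel N = 0" "N \<in> sets lborel"
      by (rule AE_E)
    have "{x \<in> space lborel. \<not> (Re (k x) = 0 \<and> x \<noteq> 0)} = UNIV" using Rekp by force
    then have "emeasure lborel (UNIV :: real set) \<le> emeasure lborel N" using N by (intro emeasure_mono) auto
    then show False using N(2) by simp
  qed
  then show ?thesis using eq nn by simp
qed

end


lemma side:
  fixes f5 f' :: "real \<Rightarrow> real \<Rightarrow> complex" and U :: "real \<Rightarrow> complex"
  assumes al0: "0 < al" and al1: "al < 1" and eta0: "0 \<le> eta" and nd: "lam \<noteq> 0 \<or> 0 < eta"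
    and S: "S = {p..q}"
    and f': "B2 S f'" and ae: "AE z in lebesgue_on (S \<times> UNIV). f5 (fst z) (snd z) = f' (fst z) (snd z)"
    and Uc: "continuous_on S U"
  defines "\<phi> \<equiv> \<lambda>x \<xi>. f' x \<xi> * (1 / dd lam eta \<xi>) + (indicator S x *\<^sub>R U x) * gg al lam eta \<xi>"
  shows "L2R S \<phi>"
    and "L2R S (\<lambda>x \<xi>. of_real \<bar>\<xi>\<bar> * \<phi> x \<xi>)"
    and "L2R S (\<lambda>x \<xi>. - of_real (\<xi>^2 + eta) * \<phi> x \<xi> + of_real (mu al \<xi>) * U x)"
    and "AE x in lebesgue_on S. integral\<^sup>L lebesgue (\<lambda>\<xi>. of_real (mu al \<xi>) * \<phi> x \<xi>)
            = (LINT \<xi>|lborel. f' x \<xi> * gg al lam eta \<xi>) + mm al lam eta * U x"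
    and "AE z in lebesgue_on (S \<times> UNIV). \<i> * of_real lam * \<phi> (fst z) (snd z)
          - (- of_real ((snd z)^2 + eta) * \<phi> (fst z) (snd z) + of_real (mu al (snd z)) * U (fst z))
          = f5 (fst z) (snd z)"
    and "L2 S (\<lambda>x. LINT \<xi>|lborel. f' x \<xi> * gg al lam eta \<xi>)"
proof -
  define U' where "U' x = indicator S x *\<^sub>R U x" for x
  have SB: "S \<in> sets borel" using S by simp
  have Sfin: "emeasure lborel S < \<infinity>" using S by (simp add: emeasure_lborel_Icc_eq)
  have U'm: "U' \<in> borel_measurable borel"
    unfolding U'_def by (rule borel_measurable_continuous_on_indicator[OF SB Uc])
  have "bounded (U ` S)" using S Uc by (intro compact_imp_bounded compact_continuous_image) auto
  then obtain K where K: "\<And>x. x \<in> S \<Longrightarrow> cmod (U x) \<le> K" unfolding bounded_iff by blast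
  have U'b: "cmod (U' x) \<le> K" if "x \<in> S" for x using K[OF that] that by (simp add: U'_def)
  have U'S: "U' x = U x" if "x \<in> S" for x using that by (simp add: U'_def)
  have phi_def': "\<phi> x \<xi> = f' x \<xi> * (1 / dd lam eta \<xi>) + U' x * gg al lam eta \<xi>" for x \<xi>
    unfolding \<phi>_def U'_def by simp
  have dd0: "dd lam eta \<xi> \<noteq> 0" for \<xi> by (rule dd_nonzero[OF al0 al1 eta0 nd])
  have ddm: "(\<lambda>\<xi>. 1 / dd lam eta \<xi>) \<in> borel_measurable borel" by measurable
  have ddm2: "(\<lambda>\<xi>. of_real \<bar>\<xi>\<bar> / dd lam eta \<xi>) \<in> borel_measurable borel" by measurable
  have xgm: "(\<lambda>\<xi>. of_real \<bar>\<xi>\<bar> * gg al lam eta \<xi>) \<in> borel_measurable borel" by measurable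
  have B\<phi>: "B2 S \<phi>"
  proof -
    have "B2 S (\<lambda>x \<xi>. f' x \<xi> * (1 / dd lam eta \<xi>) + U' x * gg al lam eta \<xi>)"
      by (intro B2_add B2_mult_bdd[OF f' ddm inv_dd_bounded[OF al0 al1 eta0 nd]]
           B2_tensor[OF SB Sfin U'm U'b gg_measurable gg_sq_integrable[OF al0 al1 eta0 nd]])
    then show ?thesis by (rule B2_cong) (simp add: phi_def')
  qed
  show "L2R S \<phi>" by (rule B2_L2R[OF S B\<phi>])
  have "B2 S (\<lambda>x \<xi>. f' x \<xi> * (of_real \<bar>\<xi>\<bar> / dd lam eta \<xi>) + U' x * (of_real \<bar>\<xi>\<bar> * gg al lam eta \<xi>))"
    by (intro B2_add B2_mult_bdd[OF f' ddm2 xi_dd_bounded[OF al0 al1 eta0 nd]]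
           B2_tensor[OF SB Sfin U'm U'b xgm xi_gg_sq_integrable[OF al0 al1 eta0 nd]])
  then have "B2 S (\<lambda>x \<xi>. of_real \<bar>\<xi>\<bar> * \<phi> x \<xi>)"
    by (rule B2_cong) (simp add: phi_def' algebra_simps)
  then show "L2R S (\<lambda>x \<xi>. of_real \<bar>\<xi>\<bar> * \<phi> x \<xi>)" by (rule B2_L2R[OF S])
  have key: "dd lam eta \<xi> * \<phi> x \<xi> = f' x \<xi> + of_real (mu al \<xi>) * U x" if "x \<in> S" for x \<xi>
    using dd0[of \<xi>] U'S[OF that] unfolding phi_def' gg_def by (simp add: field_simps)
  have ddexp: "dd lam eta \<xi> = \<i> * of_real lam + of_real (\<xi>^2 + eta)" for \<xi> by (simp add: dd_def)
  have alg: "- of_real (\<xi>^2 + eta) * \<phi> x \<xi> + of_real (mu al \<xi>) * U x = \<i> * of_real lam * \<phi> x \<xi> + (-1) * f' x \<xi>"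
    if "x \<in> S" for x \<xi>
  proof -
    have "of_real (\<xi>^2 + eta) * \<phi> x \<xi> = dd lam eta \<xi> * \<phi> x \<xi> - \<i> * of_real lam * \<phi> x \<xi>"
      by (simp add: ddexp algebra_simps)
    then show ?thesis using key[OF that, of \<xi>] by (simp add: algebra_simps)
  qed
  have "B2 S (\<lambda>x \<xi>. \<i> * of_real lam * \<phi> x \<xi> + (-1) * f' x \<xi>)"
    by (intro B2_add B2_cmult B\<phi> f')
  then have "L2R S (\<lambda>x \<xi>. \<i> * of_real lam * \<phi> x \<xi> + (-1) * f' x \<xi>)" by (rule B2_L2R[OF S])
  then show "L2R S (\<lambda>x \<xi>. - of_real (\<xi>^2 + eta) * \<phi> x \<xi> + of_real (mu al \<xi>) * U x)"
    by (rule L2R_cong) (rule sym, rule alg, assumption)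
  show "AE z in lebesgue_on (S \<times> UNIV). \<i> * of_real lam * \<phi> (fst z) (snd z)
          - (- of_real ((snd z)^2 + eta) * \<phi> (fst z) (snd z) + of_real (mu al (snd z)) * U (fst z))
          = f5 (fst z) (snd z)"
    using ae AE_space[of "lebesgue_on (S \<times> UNIV)"]
  proof eventually_elim
    case (elim z)
    then have zS: "fst z \<in> S" by (cases z) auto
    show ?case using alg[OF zS, of "snd z"] elim(1) by (simp add: algebra_simps)
  qed
  show "L2 S (\<lambda>x. LINT \<xi>|lborel. f' x \<xi> * gg al lam eta \<xi>)"
    by (rule B2_F_L2[OF f' S gg_measurable gg_sq_integrable[OF al0 al1 eta0 nd]])
  have good: "AE x in lebesgue_on S. integrable lborel (\<lambda>\<xi>. (cmod (f' x \<xi>))^2)"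
  proof -
    have "AE x in lebesgue. x \<in> S \<longrightarrow> integrable lborel (\<lambda>\<xi>. (cmod (f' x \<xi>))^2)"
      using B2_sections(1)[OF f'] by (rule AE_completion)
    then show ?thesis using SB by (subst AE_restrict_space_iff) auto
  qed
  show "AE x in lebesgue_on S. integral\<^sup>L lebesgue (\<lambda>\<xi>. of_real (mu al \<xi>) * \<phi> x \<xi>)
            = (LINT \<xi>|lborel. f' x \<xi> * gg al lam eta \<xi>) + mm al lam eta * U x"
    using good AE_space[of "lebesgue_on S"]
  proof eventually_elim
    case (elim x)
    then have xS: "x \<in> S" using S by simp
    have hi: "integrable lborel (\<lambda>\<xi>. (cmod (f' x \<xi>))^2)" using elim by simp
    define k where "k \<xi> = complex_of_real (mu al \<xi>) * complex_of_real (mu al \<xi>) / dd lam eta \<xi>" for \<xi>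
    have ki: "integrable lborel k" unfolding k_def by (rule mm_integrable[OF al0 al1 eta0 nd])
    have hxm: "(\<lambda>\<xi>. f' x \<xi>) \<in> borel_measurable lborel"
      using measurable_Pair2[OF B2_meas[OF f'], of x] by simp
    have gi: "integrable lborel (\<lambda>\<xi>. f' x \<xi> * gg al lam eta \<xi>)"
      by (rule prod_L2_integrable[OF hxm _ hi gg_sq_integrable[OF al0 al1 eta0 nd]]) (simp add: measurable_lborel2)
    have pw: "of_real (mu al \<xi>) * \<phi> x \<xi> = f' x \<xi> * gg al lam eta \<xi> + U x * k \<xi>" for \<xi>
      unfolding phi_def' U'S[OF xS] k_def gg_def by (simp add: algebra_simps)
    have m: "(\<lambda>\<xi>. f' x \<xi> * gg al lam eta \<xi> + U x * k \<xi>) \<in> borel_measurable lborel"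
      using gi ki by (intro borel_measurable_add borel_measurable_integrable) (auto intro: integrable_mult_right)
    have "integral\<^sup>L lebesgue (\<lambda>\<xi>. of_real (mu al \<xi>) * \<phi> x \<xi>)
        = integral\<^sup>L lebesgue (\<lambda>\<xi>. f' x \<xi> * gg al lam eta \<xi> + U x * k \<xi>)" by (simp only: pw)
    also have "\<dots> = (LINT \<xi>|lborel. f' x \<xi> * gg al lam eta \<xi> + U x * k \<xi>)"
      by (rule integral_completion[OF m])
    also have "\<dots> = (LINT \<xi>|lborel. f' x \<xi> * gg al lam eta \<xi>) + U x * (LINT \<xi>|lborel. k \<xi>)"
      using gi ki by (simp add: Bochner_Integration.integral_add integrable_mult_right)
    also have "(LINT \<xi>|lborel. k \<xi>) = mm al lam eta" unfolding k_def mm_def by simp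
    finally show ?case by (simp add: mult.commute)
  qed
qed


lemma Cfrak_pos: "0 < al \<Longrightarrow> al < 1 \<Longrightarrow> 0 < Cfrak al"
  unfolding Cfrak_def by (intro divide_pos_pos sin_gt_zero) auto

lemma surj_main:
  fixes \<rho>1 \<rho>2 k1 k2 L \<alpha> \<eta> lam :: real
  assumes r1p: "\<rho>1 > 0" and r2p: "\<rho>2 > 0" and k1p: "k1 > 0" and k2p: "k2 > 0" and Lp: "L > 0"
    and al0: "0 < \<alpha>" and al1: "\<alpha> < 1" and eta0: "\<eta> \<ge> 0" and nd: "lam \<noteq> 0 \<or> 0 < \<eta>"
  shows "resolvent_surjective \<rho>1 \<rho>2 k1 k2 L \<alpha> \<eta> lam"
  unfolding resolvent_surjective_def
proof (intro allI impI)
  fix f1 f2 f3 f4 :: "real \<Rightarrow> complex" and f5 f6 :: "real \<Rightarrow> real \<Rightarrow> complex"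
  assume H: "in_H L f1 f2 f3 f4 f5 f6"
  have H1f1: "H1 (-L) 0 f1" and H1f2: "H1 0 L f2" and f1L: "f1 (-L) = 0" and f2L: "f2 L = 0" and f12: "f1 0 = f2 0"
    and L2f3: "L2 {-L..0} f3" and L2f4: "L2 {0..L} f4" and L2Rf5: "L2R {-L..0} f5" and L2Rf6: "L2R {0..L} f6"
    using H unfolding in_H_def H10_def by auto
  obtain gf1 where gf1: "has_weak_deriv (-L) 0 f1 gf1" using H1f1 unfolding H1_def by blast
  obtain gf2 where gf2: "has_weak_deriv 0 L f2 gf2" using H1f2 unfolding H1_def by blast
  have L2f1: "L2 {-L..0} f1" using H1f1 unfolding H1_def by blast
  have L2f2: "L2 {0..L} f2" using H1f2 unfolding H1_def by blast
  have ACf1: "AC (-L) 0 f1 gf1" and L2gf1: "L2 {-L..0} gf1" using gf1 unfolding hwd_iff by auto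
  have ACf2: "AC 0 L f2 gf2" and L2gf2: "L2 {0..L} gf2" using gf2 unfolding hwd_iff by auto
  have cf1: "continuous_on {-L..0} f1" by (rule AC_cont[OF ACf1])
  have cf2: "continuous_on {0..L} f2" by (rule AC_cont[OF ACf2])
  obtain f5' where f5': "B2 {-L..0} f5'" and ae5: "AE z in lebesgue_on ({-L..0} \<times> UNIV). f5 (fst z) (snd z) = f5' (fst z) (snd z)"
    using L2R_to_B2[OF refl L2Rf5] by blast
  obtain f6' where f6': "B2 {0..L} f6'" and ae6: "AE z in lebesgue_on ({0..L} \<times> UNIV). f6 (fst z) (snd z) = f6' (fst z) (snd z)"
    using L2R_to_B2[OF refl L2Rf6] by blast
  define C where "C = Cfrak \<alpha>"
  define m where "m = mm \<alpha> lam \<eta>"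
  define F5 where "F5 x = (LINT \<xi>|lborel. f5' x \<xi> * gg \<alpha> lam \<eta> \<xi>)" for x
  define F6 where "F6 x = (LINT \<xi>|lborel. f6' x \<xi> * gg \<alpha> lam \<eta> \<xi>)" for x
  define \<beta>1 where "\<beta>1 = \<i> * of_real lam * of_real \<rho>1 + of_real C * m"
  define \<beta>2 where "\<beta>2 = \<i> * of_real lam * of_real \<rho>2 + of_real C * m"
  define a1 where "a1 = \<i> * of_real lam * \<beta>1 / of_real k1"
  define a2 where "a2 = \<i> * of_real lam * \<beta>2 / of_real k2"
  define r1 where "r1 x = (- \<beta>1 / of_real k1) * f1 x + (of_real C / of_real k1) * F5 x + (- of_real \<rho>1 / of_real k1) * f3 x" for x
  define r2 where "r2 x = (- \<beta>2 / of_real k2) * f2 x + (of_real C / of_real k2) * F6 x + (- of_real \<rho>2 / of_real k2) * f4 x" for x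
  have L2F5: "L2 {-L..0} F5" unfolding F5_def
    by (rule B2_F_L2[OF f5' refl gg_measurable gg_sq_integrable[OF al0 al1 eta0 nd]])
  have L2F6: "L2 {0..L} F6" unfolding F6_def
    by (rule B2_F_L2[OF f6' refl gg_measurable gg_sq_integrable[OF al0 al1 eta0 nd]])
  have L2r1: "L2 {-L..0} r1" unfolding r1_def by (intro L2_add L2_cmult L2f1 L2F5 L2f3)
  have L2r2: "L2 {0..L} r2" unfolding r2_def by (intro L2_add L2_cmult L2f2 L2F6 L2f4)
  have Cp: "0 < C" unfolding C_def by (rule Cfrak_pos[OF al0 al1])
  have k1a1: "of_real k1 * a1 = \<i> * of_real lam * \<beta>1" using k1p by (simp add: a1_def)
  have k2a2: "of_real k2 * a2 = \<i> * of_real lam * \<beta>2" using k2p by (simp add: a2_def)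
  have Im1: "Im (of_real k1 * a1) = lam * C * Re m" unfolding k1a1 \<beta>1_def by (simp add: algebra_simps)
  have Im2: "Im (of_real k2 * a2) = lam * C * Re m" unfolding k2a2 \<beta>2_def by (simp add: algebra_simps)
  have ndb: "(a1 = 0 \<and> a2 = 0) \<or> (Im (of_real k1 * a1) = Im (of_real k2 * a2) \<and> Im (of_real k1 * a1) \<noteq> 0)"
  proof (cases "lam = 0")
    case True then show ?thesis by (simp add: a1_def a2_def)
  next
    case False
    have "0 < Re m" unfolding m_def by (rule mm_Re_pos[OF al0 al1 eta0 nd])
    then have "lam * C * Re m \<noteq> 0" using False Cp by simp
    then show ?thesis using Im1 Im2 by simp
  qed
  obtain u g1 v g2 where ACu: "AC (-L) 0 u g1" and ACg1: "AC (-L) 0 g1 (\<lambda>x. a1 * u x + r1 x)"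
    and ACv: "AC 0 L v g2" and ACg2: "AC 0 L g2 (\<lambda>x. a2 * v x + r2 x)"
    and uL: "u (-L) = 0" and vL: "v L = 0" and uv0: "u 0 = v 0" and kg: "of_real k1 * g1 0 = of_real k2 * g2 0"
    using bvp[OF k1p k2p Lp ndb L2_absint[OF L2r1] L2_absint[OF L2r2]] by blast
  define U where "U x = \<i> * of_real lam * u x - f1 x" for x
  define V where "V x = \<i> * of_real lam * v x - f2 x" for x
  define h1 where "h1 x = a1 * u x + r1 x" for x
  define h2 where "h2 x = a2 * v x + r2 x" for x
  have cu: "continuous_on {-L..0} u" by (rule AC_cont[OF ACu])
  have cv: "continuous_on {0..L} v" by (rule AC_cont[OF ACv])
  have cg1: "continuous_on {-L..0} g1" by (rule AC_cont[OF ACg1])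
  have cg2: "continuous_on {0..L} g2" by (rule AC_cont[OF ACg2])
  have cU: "continuous_on {-L..0} U" unfolding U_def by (intro continuous_intros cu cf1)
  have cV: "continuous_on {0..L} V" unfolding V_def by (intro continuous_intros cv cf2)
  define \<phi>1 where "\<phi>1 = (\<lambda>x \<xi>. f5' x \<xi> * (1 / dd lam \<eta> \<xi>) + (indicator {-L..0} x *\<^sub>R U x) * gg \<alpha> lam \<eta> \<xi>)"
  define \<phi>2 where "\<phi>2 = (\<lambda>x \<xi>. f6' x \<xi> * (1 / dd lam \<eta> \<xi>) + (indicator {0..L} x *\<^sub>R V x) * gg \<alpha> lam \<eta> \<xi>)"
  note S1 = side[OF al0 al1 eta0 nd refl f5' ae5 cU]
  note S2 = side[OF al0 al1 eta0 nd refl f6' ae6 cV]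
  have P1: "L2R {-L..0} \<phi>1" unfolding \<phi>1_def by (rule S1(1))
  have P2: "L2R {0..L} \<phi>2" unfolding \<phi>2_def by (rule S2(1))
  show "\<exists>u v U V \<phi>1 \<phi>2. resolvent_solution \<rho>1 \<rho>2 k1 k2 L \<alpha> \<eta> lam f1 f2 f3 f4 f5 f6 u v U V \<phi>1 \<phi>2"
  proof (intro exI)
    show "resolvent_solution \<rho>1 \<rho>2 k1 k2 L \<alpha> \<eta> lam f1 f2 f3 f4 f5 f6 u v U V \<phi>1 \<phi>2"
      unfolding resolvent_solution_def
    proof (intro conjI exI)
      have L2u: "L2 {-L..0} u" by (rule L2_cont[OF cu])
      have L2v: "L2 {0..L} v" by (rule L2_cont[OF cv])
      have L2U: "L2 {-L..0} U" unfolding U_def by (intro L2_diff L2_cmult L2u L2f1)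
      have L2V: "L2 {0..L} V" unfolding V_def by (intro L2_diff L2_cmult L2v L2f2)
      have hu: "has_weak_deriv (-L) 0 u g1" unfolding hwd_iff using L2_cont[OF cg1] ACu by simp
      have hv: "has_weak_deriv 0 L v g2" unfolding hwd_iff using L2_cont[OF cg2] ACv by simp
      show "in_H L u v U V \<phi>1 \<phi>2"
        unfolding in_H_def H10_def H1_def using L2u L2v L2U L2V hu hv uL vL uv0 P1 P2 by blast
      have hU: "has_weak_deriv (-L) 0 U (\<lambda>x. \<i> * of_real lam * g1 x - gf1 x)"
        unfolding hwd_iff U_def
        by (intro conjI L2_diff L2_cmult L2_cont[OF cg1] L2gf1 AC_diff AC_cmult ACu ACf1)
      have hV: "has_weak_deriv 0 L V (\<lambda>x. \<i> * of_real lam * g2 x - gf2 x)"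
        unfolding hwd_iff V_def
        by (intro conjI L2_diff L2_cmult L2_cont[OF cg2] L2gf2 AC_diff AC_cmult ACv ACf2)
      show "H10 L U V"
        unfolding H10_def H1_def using L2U L2V hU hV uL vL uv0 f1L f2L f12 by (auto simp: U_def V_def)
      show "has_weak_deriv (-L) 0 u g1" by (rule hu)
      show "has_weak_deriv 0 L v g2" by (rule hv)
      show "has_weak_deriv (-L) 0 g1 h1"
        unfolding hwd_iff h1_def by (intro conjI L2_add L2_cmult L2u L2r1 ACg1)
      show "has_weak_deriv 0 L g2 h2"
        unfolding hwd_iff h2_def by (intro conjI L2_add L2_cmult L2v L2r2 ACg2)
      show "of_real k1 * g1 0 = of_real k2 * g2 0" by (rule kg)
      show "L2R {-L..0} (\<lambda>x \<xi>. of_real \<bar>\<xi>\<bar> * \<phi>1 x \<xi>)" unfolding \<phi>1_def by (rule S1(2))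
      show "L2R {-L..0} (\<lambda>x \<xi>. - of_real (\<xi>^2 + \<eta>) * \<phi>1 x \<xi> + of_real (mu \<alpha> \<xi>) * U x)" unfolding \<phi>1_def by (rule S1(3))
      show "L2R {0..L} (\<lambda>x \<xi>. of_real \<bar>\<xi>\<bar> * \<phi>2 x \<xi>)" unfolding \<phi>2_def by (rule S2(2))
      show "L2R {0..L} (\<lambda>x \<xi>. - of_real (\<xi>^2 + \<eta>) * \<phi>2 x \<xi> + of_real (mu \<alpha> \<xi>) * V x)" unfolding \<phi>2_def by (rule S2(3))
      show "\<forall>x\<in>{-L..0}. \<i> * of_real lam * u x - U x = f1 x" by (simp add: U_def)
      show "\<forall>x\<in>{0..L}. \<i> * of_real lam * v x - V x = f2 x" by (simp add: V_def)
      show "AE p in lebesgue_on ({-L..0} \<times> UNIV). \<i> * of_real lam * \<phi>1 (fst p) (snd p)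
          - (- of_real ((snd p)^2 + \<eta>) * \<phi>1 (fst p) (snd p) + of_real (mu \<alpha> (snd p)) * U (fst p))
          = f5 (fst p) (snd p)" unfolding \<phi>1_def by (rule S1(5))
      show "AE p in lebesgue_on ({0..L} \<times> UNIV). \<i> * of_real lam * \<phi>2 (fst p) (snd p)
          - (- of_real ((snd p)^2 + \<eta>) * \<phi>2 (fst p) (snd p) + of_real (mu \<alpha> (snd p)) * V (fst p))
          = f6 (fst p) (snd p)" unfolding \<phi>2_def by (rule S2(5))
      show "AE x in lebesgue_on {-L..0}. \<i> * of_real lam * U x
          - (of_real k1 * h1 x - of_real (Cfrak \<alpha>) *
               integral\<^sup>L lebesgue (\<lambda>\<xi>. of_real (mu \<alpha> \<xi>) * \<phi>1 x \<xi>)) / of_real \<rho>1 = f3 x"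
        using S1(4)
      proof eventually_elim
        case (elim x)
        have I: "integral\<^sup>L lebesgue (\<lambda>\<xi>. of_real (mu \<alpha> \<xi>) * \<phi>1 x \<xi>) = F5 x + m * U x"
          unfolding F5_def m_def \<phi>1_def using elim .
        have kh: "of_real k1 * h1 x = \<beta>1 * U x + of_real C * F5 x - of_real \<rho>1 * f3 x"
          using k1p unfolding h1_def r1_def U_def a1_def by (simp add: field_simps)
        have "of_real k1 * h1 x - of_real C * (F5 x + m * U x) = of_real \<rho>1 * (\<i> * of_real lam * U x - f3 x)"
          unfolding kh \<beta>1_def by (simp add: algebra_simps)
        then show ?case unfolding I C_def[symmetric] using r1p by (simp add: field_simps)
      qed
      show "AE x in lebesgue_on {0..L}. \<i> * of_real lam * V x
          - (of_real k2 * h2 x - of_real (Cfrak \<alpha>) *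
               integral\<^sup>L lebesgue (\<lambda>\<xi>. of_real (mu \<alpha> \<xi>) * \<phi>2 x \<xi>)) / of_real \<rho>2 = f4 x"
        using S2(4)
      proof eventually_elim
        case (elim x)
        have I: "integral\<^sup>L lebesgue (\<lambda>\<xi>. of_real (mu \<alpha> \<xi>) * \<phi>2 x \<xi>) = F6 x + m * V x"
          unfolding F6_def m_def \<phi>2_def using elim .
        have kh: "of_real k2 * h2 x = \<beta>2 * V x + of_real C * F6 x - of_real \<rho>2 * f4 x"
          using k2p unfolding h2_def r2_def V_def a2_def by (simp add: field_simps)
        have "of_real k2 * h2 x - of_real C * (F6 x + m * V x) = of_real \<rho>2 * (\<i> * of_real lam * V x - f4 x)"
          unfolding kh \<beta>2_def by (simp add: algebra_simps)
        then show ?case unfolding I C_def[symmetric] using r2p by (simp add: field_simps)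
      qed
    qed
  qed
qed

theorem proposition4p5:
  fixes \<rho>1 \<rho>2 k1 k2 L \<alpha> \<eta> :: real
  assumes "\<rho>1 > 0" "\<rho>2 > 0" "k1 > 0" "k2 > 0" "L > 0"
    and "0 < \<alpha>" "\<alpha> < 1" and "\<eta> \<ge> 0"
  shows "(\<eta> = 0 \<longrightarrow> (\<forall>lam::real. lam \<noteq> 0 \<longrightarrow> resolvent_surjective \<rho>1 \<rho>2 k1 k2 L \<alpha> \<eta> lam)) \<and>
         (\<eta> > 0 \<longrightarrow> (\<forall>lam::real. resolvent_surjective \<rho>1 \<rho>2 k1 k2 L \<alpha> \<eta> lam))"
  using surj_main[OF assms] by blast


end
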